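(* Let $p$ be a prime and $m\ge 2$, and let $\mathcal{G}$ be the set of all groups isomorphic to either $H_1=\mathbb{Z}_p^{m-1}$ or $H_2=\mathbb{Z}_p^m$. Any algorithm that, for $G\in\mathcal{G}$ of unknown size, decides with probability at least $2/3$ whether $G$ is isomorphic to $H_1$ or to $H_2$ must access an oracle that returns uniformly random elements of $G$ and the Cayley table of $G$ at least $\Omega(p^{m/2-1/2}/\log p)=\Omega(|G|^{1/2}/(\sqrt{p}\log p))$ times.
   Context: The element sets of the groups in $\mathcal{G}$ are subsets of a fixed countable set. Access model (partially specified model): the algorithm does not know $|G|$; it can obtain independent uniformly random elements of $G$ from an oracle and query the Cayley table on elements observed so far; each oracle call and each table query counts as one access. *)

theory Defs
  imports "HOL-Algebra.Elementary_Groups" "HOL-Algebra.Product_Groups"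
          "HOL-Probability.Probability"
begin

definition Zp_pow :: "nat \<Rightarrow> nat \<Rightarrow> (nat \<Rightarrow> int) monoid" where
  "Zp_pow p k = product_group {..<k} (\<lambda>_. integer_mod_group p)"

definition group_class :: "nat \<Rightarrow> nat \<Rightarrow> nat monoid set" where
  "group_class p m = {G. group G \<and> (G \<cong> Zp_pow p (m - 1) \<or> G \<cong> Zp_pow p m)}"

text \<open>Actions of an algorithm: draw a uniformly random element (one access),
  query the Cayley table on the i-th and j-th elements observed so far (one access),
  or halt with an answer (True = "G is isomorphic to Z_p^m").\<close>
datatype action = Sample | Mult nat nat | Answer bool

text \<open>A randomized algorithm: given the full transcript so far (its own past actions and
  the oracle's responses), it chooses a distribution over the next action.
  (Behavioural strategies with perfect recall; equivalent to arbitrary private randomness.)\<close>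
type_synonym algorithm = "(action \<times> nat) list \<Rightarrow> action pmf"

text \<open>Response to a Cayley table query: product of the i-th and j-th observed elements.
  Queries on indices not yet observed return a fixed dummy value (carrying no information).\<close>
definition table_resp :: "nat monoid \<Rightarrow> (action \<times> nat) list \<Rightarrow> nat \<Rightarrow> nat \<Rightarrow> nat" where
  "table_resp G h i j =
     (if i < length h \<and> j < length h then snd (h ! i) \<otimes>\<^bsub>G\<^esub> snd (h ! j) else 0)"

primrec exec :: "nat monoid \<Rightarrow> algorithm \<Rightarrow> nat \<Rightarrow> (action \<times> nat) list \<Rightarrow> bool option pmf" where
  "exec G A 0 h =
     A h \<bind> (\<lambda>a. case a of Answer b \<Rightarrow> return_pmf (Some b) | _ \<Rightarrow> return_pmf None)"
| "exec G A (Suc n) h =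
     A h \<bind> (\<lambda>a. case a of
        Answer b \<Rightarrow> return_pmf (Some b)
      | Sample \<Rightarrow> pmf_of_set (carrier G) \<bind> (\<lambda>x. exec G A n (h @ [(Sample, x)]))
      | Mult i j \<Rightarrow> exec G A n (h @ [(Mult i j, table_resp G h i j)]))"

definition decides_with :: "nat \<Rightarrow> nat \<Rightarrow> algorithm \<Rightarrow> nat \<Rightarrow> bool" where
  "decides_with p m A q \<longleftrightarrow>
     (\<forall>G \<in> group_class p m.
        measure_pmf.prob (exec G A q []) {Some (G \<cong> Zp_pow p m)} \<ge> 2/3)"

end

theory Submission
  imports Defs "HOL-Library.FuncSet"
begin

lemma prob_bind_pmf:
  "measure_pmf.prob (bind_pmf M f) X = (\<integral>x. measure_pmf.prob (f x) X \<partial>measure_pmf M)"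
proof -
  have "ennreal (measure_pmf.prob (bind_pmf M f) X) = emeasure (bind_pmf M f) X"
    by (simp add: measure_pmf.emeasure_eq_measure)
  also have "\<dots> = (\<integral>\<^sup>+x. emeasure (f x) X \<partial>M)" by simp
  also have "\<dots> = (\<integral>\<^sup>+x. ennreal (measure_pmf.prob (f x) X) \<partial>M)"
    by (simp add: measure_pmf.emeasure_eq_measure)
  also have "\<dots> = ennreal (\<integral>x. measure_pmf.prob (f x) X \<partial>measure_pmf M)"
    by (rule nn_integral_eq_integral)
       (auto intro!: measure_pmf.integrable_const_bound[where B=1])
  finally show ?thesis by (simp add: integral_nonneg)
qed

lemma integrable_pmf_bnd:
  fixes f :: "'a \<Rightarrow> real"
  assumes "\<And>x. \<bar>f x\<bar> \<le> B" shows "integrable (measure_pmf M) f"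
  by (rule measure_pmf.integrable_const_bound[where B=B]) (use assms in auto)

primrec TT :: "algorithm \<Rightarrow> nat set \<Rightarrow> ((action \<times> nat) list \<Rightarrow> real) \<Rightarrow> bool option set
   \<Rightarrow> nat \<Rightarrow> (action \<times> nat) list \<Rightarrow> real" where
  "TT A L Lam Ob 0 h = Lam h * (\<integral>a. (case a of Answer b \<Rightarrow> indicator Ob (Some b)
        | Sample \<Rightarrow> indicator Ob None | Mult i j \<Rightarrow> indicator Ob None) \<partial>measure_pmf (A h))"
| "TT A L Lam Ob (Suc n) h = (\<integral>a. (case a of Answer b \<Rightarrow> Lam h * indicator Ob (Some b)
        | Sample \<Rightarrow> (\<Sum>l\<in>L. TT A L Lam Ob n (h @ [(Sample, l)]))
        | Mult i j \<Rightarrow> (\<Sum>l\<in>L. TT A L Lam Ob n (h @ [(Mult i j, l)]))) \<partial>measure_pmf (A h))"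

lemma abs_integral_pmf_le:
  fixes f :: "'a \<Rightarrow> real"
  assumes "\<And>x. \<bar>f x\<bar> \<le> C" shows "\<bar>\<integral>x. f x \<partial>measure_pmf M\<bar> \<le> C"
proof -
  have "\<bar>\<integral>x. f x \<partial>measure_pmf M\<bar> \<le> (\<integral>x. \<bar>f x\<bar> \<partial>measure_pmf M)"
    by (rule integral_abs_bound)
  also have "\<dots> \<le> (\<integral>x. C \<partial>measure_pmf M)"
    by (rule integral_mono) (use assms in \<open>auto intro!: integrable_pmf_bnd[where B=C]\<close>)
  also have "\<dots> = C" by simp
  finally show ?thesis .
qed

lemma TT_bound:
  assumes L: "finite L" and B: "\<And>h. \<bar>Lam h\<bar> \<le> B"
  shows "\<bar>TT A L Lam Ob n h\<bar> \<le> B * (real (card L) + 1) ^ n"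
proof (induction n arbitrary: h)
  case 0
  have B0: "0 \<le> B" using B[of h] by linarith
  have "\<bar>TT A L Lam Ob 0 h\<bar> \<le> \<bar>Lam h\<bar> * 1"
    unfolding TT.simps abs_mult
    by (rule mult_left_mono[OF abs_integral_pmf_le])
       (auto split: action.splits simp: indicator_def)
  then have "\<bar>TT A L Lam Ob 0 h\<bar> \<le> B * 1"
    using B[of h] by linarith
  then show ?case by simp
next
  case (Suc n)
  have B0: "0 \<le> B" using B[of h] by linarith
  let ?C = "B * (real (card L) + 1) ^ n"
  have C0: "0 \<le> ?C" using B0 by simp
  have sb: "\<bar>\<Sum>l\<in>L. TT A L Lam Ob n (h @ [(a, l)])\<bar> \<le> real (card L) * ?C" for a
  proof -
    have "\<bar>\<Sum>l\<in>L. TT A L Lam Ob n (h @ [(a, l)])\<bar> \<le> (\<Sum>l\<in>L. \<bar>TT A L Lam Ob n (h @ [(a, l)])\<bar>)"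
      by (rule sum_abs)
    also have "\<dots> \<le> (\<Sum>l\<in>L. ?C)" by (rule sum_mono) (rule Suc.IH)
    finally show ?thesis by simp
  qed
  have "\<bar>TT A L Lam Ob (Suc n) h\<bar> \<le> (real (card L) + 1) * ?C"
    unfolding TT.simps
  proof (rule abs_integral_pmf_le)
    fix a show "\<bar>case a of Answer b \<Rightarrow> Lam h * indicator Ob (Some b)
        | Sample \<Rightarrow> (\<Sum>l\<in>L. TT A L Lam Ob n (h @ [(Sample, l)]))
        | Mult i j \<Rightarrow> (\<Sum>l\<in>L. TT A L Lam Ob n (h @ [(Mult i j, l)]))\<bar> \<le> (real (card L) + 1) * ?C"
    proof (cases a)
      case Sample then show ?thesis using sb[of Sample] C0 by (simp add: algebra_simps)
    next
      case (Mult i j) then show ?thesis using sb[of "Mult i j"] C0 by (simp add: algebra_simps)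
    next
      case (Answer b)
      have "\<bar>Lam h * indicator Ob (Some b)\<bar> \<le> B" using B[of h]
        by (auto simp: indicator_def abs_mult)
      also have "B \<le> (real (card L) + 1) * ?C"
      proof -
        have "1 \<le> (real (card L) + 1) ^ Suc n" by (rule one_le_power) simp
        then have "B * 1 \<le> B * (real (card L) + 1) ^ Suc n" using B0 by (rule mult_left_mono)
        then show ?thesis by (simp add: algebra_simps)
      qed
      finally show ?thesis using Answer by simp
    qed
  qed
  then show ?case by (simp add: algebra_simps)
qed

lemma TT_integrable:
  assumes L: "finite L" and B: "\<And>h. \<bar>Lam h\<bar> \<le> B"
  shows "integrable (measure_pmf M) (\<lambda>a. case a of Answer b \<Rightarrow> Lam h * indicator Ob (Some b)
        | Sample \<Rightarrow> (\<Sum>l\<in>L. TT A L Lam Ob n (h @ [(Sample, l)]))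
        | Mult i j \<Rightarrow> (\<Sum>l\<in>L. TT A L Lam Ob n (h @ [(Mult i j, l)])))"
proof (rule integrable_pmf_bnd[where B="B + real (card L) * (B * (real (card L) + 1) ^ n)"])
  fix a
  have B0: "0 \<le> B" using B[of h] by linarith
  let ?C = "B * (real (card L) + 1) ^ n"
  have C0: "0 \<le> ?C" using B0 by simp
  have sb: "\<bar>\<Sum>l\<in>L. TT A L Lam Ob n (h @ [(a, l)])\<bar> \<le> real (card L) * ?C" for a
  proof -
    have "\<bar>\<Sum>l\<in>L. TT A L Lam Ob n (h @ [(a, l)])\<bar> \<le> (\<Sum>l\<in>L. \<bar>TT A L Lam Ob n (h @ [(a, l)])\<bar>)"
      by (rule sum_abs)
    also have "\<dots> \<le> (\<Sum>l\<in>L. ?C)" by (rule sum_mono) (rule TT_bound[OF L B])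
    finally show ?thesis by simp
  qed
  have ab: "\<bar>Lam h * indicator Ob (Some b)\<bar> \<le> B" for b using B[of h]
    by (auto simp: indicator_def abs_mult)
  show "\<bar>case a of Answer b \<Rightarrow> Lam h * indicator Ob (Some b)
        | Sample \<Rightarrow> (\<Sum>l\<in>L. TT A L Lam Ob n (h @ [(Sample, l)]))
        | Mult i j \<Rightarrow> (\<Sum>l\<in>L. TT A L Lam Ob n (h @ [(Mult i j, l)]))\<bar>
        \<le> B + real (card L) * (B * (real (card L) + 1) ^ n)"
  proof (cases a)
    case Sample then show ?thesis using sb[of Sample] B0 by simp
  next
    case (Mult x y) then show ?thesis using sb[of "Mult x y"] B0 by simp
  next
    case (Answer b)
    have X: "0 \<le> real (card L) * ?C" using C0 by simp
    show ?thesis unfolding Answer action.case using X ab[of b] by linarith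
  qed
qed

lemma TT_sum:
  assumes L: "finite L" and I: "finite I" and B: "\<And>i h. i \<in> I \<Longrightarrow> \<bar>Lam i h\<bar> \<le> B"
  shows "TT A L (\<lambda>h. \<Sum>i\<in>I. w i * Lam i h) Ob n h = (\<Sum>i\<in>I. w i * TT A L (Lam i) Ob n h)"
proof (induction n arbitrary: h)
  case 0
  then show ?case by (simp add: sum_distrib_right mult.assoc)
next
  case (Suc n)
  have pw: "(case a of Answer b \<Rightarrow> (\<Sum>i\<in>I. w i * Lam i h) * indicator Ob (Some b)
        | Sample \<Rightarrow> (\<Sum>l\<in>L. TT A L (\<lambda>h. \<Sum>i\<in>I. w i * Lam i h) Ob n (h @ [(Sample, l)]))
        | Mult i j \<Rightarrow> (\<Sum>l\<in>L. TT A L (\<lambda>h. \<Sum>i\<in>I. w i * Lam i h) Ob n (h @ [(Mult i j, l)])))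
      = (\<Sum>i\<in>I. w i * (case a of Answer b \<Rightarrow> Lam i h * indicator Ob (Some b)
        | Sample \<Rightarrow> (\<Sum>l\<in>L. TT A L (Lam i) Ob n (h @ [(Sample, l)]))
        | Mult i' j \<Rightarrow> (\<Sum>l\<in>L. TT A L (Lam i) Ob n (h @ [(Mult i' j, l)]))))" for a
    by (cases a) (auto simp: Suc.IH sum_distrib_right sum_distrib_left mult.assoc intro: sum.swap)
  let ?F = "\<lambda>i a. (case a of Answer b \<Rightarrow> Lam i h * indicator Ob (Some b)
        | Sample \<Rightarrow> (\<Sum>l\<in>L. TT A L (Lam i) Ob n (h @ [(Sample, l)]))
        | Mult i' j \<Rightarrow> (\<Sum>l\<in>L. TT A L (Lam i) Ob n (h @ [(Mult i' j, l)])))"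
  have "(\<integral>a. (\<Sum>i\<in>I. w i * ?F i a) \<partial>measure_pmf (A h)) = (\<Sum>i\<in>I. (\<integral>a. w i * ?F i a \<partial>measure_pmf (A h)))"
    by (rule Bochner_Integration.integral_sum) (auto intro!: TT_integrable[OF L, where B=B] B)
  also have "\<dots> = (\<Sum>i\<in>I. w i * (\<integral>a. ?F i a \<partial>measure_pmf (A h)))"
    by (simp only: integral_mult_right_zero)
  finally show ?case
    unfolding TT.simps pw .
qed

lemma TT_mono:
  assumes L: "finite L" and B1: "\<And>h. \<bar>Lam1 h\<bar> \<le> B" and B2: "\<And>h. \<bar>Lam2 h\<bar> \<le> B"
    and le: "\<And>h'. length h' \<le> length h + n \<Longrightarrow> Lam1 h' \<le> Lam2 h'"
  shows "TT A L Lam1 Ob n h \<le> TT A L Lam2 Ob n h"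
  using le
proof (induction n arbitrary: h)
  case 0
  have "0 \<le> (\<integral>a. (case a of Answer b \<Rightarrow> indicator Ob (Some b)
        | Sample \<Rightarrow> indicator Ob None | Mult i j \<Rightarrow> indicator Ob None) \<partial>measure_pmf (A h) :: real)"
    by (rule Bochner_Integration.integral_nonneg) (auto split: action.splits)
  then show ?case using "0.prems"[of h] by (simp add: mult_right_mono)
next
  case (Suc n)
  show ?case unfolding TT.simps
  proof (rule integral_mono[OF TT_integrable[OF L B1] TT_integrable[OF L B2]])
    fix a
    have ih: "TT A L Lam1 Ob n (h @ [(a', l)]) \<le> TT A L Lam2 Ob n (h @ [(a', l)])" for a' l
      by (rule Suc.IH) (use Suc.prems in auto)
    have "Lam1 h \<le> Lam2 h" using Suc.prems[of h] by simp
    then show "(case a of Answer b \<Rightarrow> Lam1 h * indicator Ob (Some b)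
        | Sample \<Rightarrow> (\<Sum>l\<in>L. TT A L Lam1 Ob n (h @ [(Sample, l)]))
        | Mult i j \<Rightarrow> (\<Sum>l\<in>L. TT A L Lam1 Ob n (h @ [(Mult i j, l)])))
      \<le> (case a of Answer b \<Rightarrow> Lam2 h * indicator Ob (Some b)
        | Sample \<Rightarrow> (\<Sum>l\<in>L. TT A L Lam2 Ob n (h @ [(Sample, l)]))
        | Mult i j \<Rightarrow> (\<Sum>l\<in>L. TT A L Lam2 Ob n (h @ [(Mult i j, l)])))"
      by (cases a) (auto intro!: sum_mono ih mult_right_mono)
  qed
qed

lemma TT_mono_set:
  assumes L: "finite L" and B: "\<And>h. \<bar>Lam h\<bar> \<le> B"
    and nn: "\<And>h'. length h' \<le> length h + n \<Longrightarrow> 0 \<le> Lam h'" and sub: "Ob \<subseteq> Ob'"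
  shows "TT A L Lam Ob n h \<le> TT A L Lam Ob' n h"
  using nn
proof (induction n arbitrary: h)
  case 0
  have "(\<integral>a. (case a of Answer b \<Rightarrow> indicator Ob (Some b)
        | Sample \<Rightarrow> indicator Ob None | Mult i j \<Rightarrow> indicator Ob None) \<partial>measure_pmf (A h) :: real)
     \<le> (\<integral>a. (case a of Answer b \<Rightarrow> indicator Ob' (Some b)
        | Sample \<Rightarrow> indicator Ob' None | Mult i j \<Rightarrow> indicator Ob' None) \<partial>measure_pmf (A h))"
    by (rule integral_mono)
       (use sub in \<open>auto intro!: integrable_pmf_bnd[where B=1] split: action.splits simp: indicator_def\<close>)
  then show ?case using "0.prems"[of h] by (simp add: mult_left_mono)
next
  case (Suc n)
  show ?case unfolding TT.simps
  proof (rule integral_mono[OF TT_integrable[OF L B] TT_integrable[OF L B]])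
    fix a
    have ih: "TT A L Lam Ob n (h @ [(a', l)]) \<le> TT A L Lam Ob' n (h @ [(a', l)])" for a' l
      by (rule Suc.IH) (use Suc.prems in auto)
    have "0 \<le> Lam h" using Suc.prems[of h] by simp
    then show "(case a of Answer b \<Rightarrow> Lam h * indicator Ob (Some b)
        | Sample \<Rightarrow> (\<Sum>l\<in>L. TT A L Lam Ob n (h @ [(Sample, l)]))
        | Mult i j \<Rightarrow> (\<Sum>l\<in>L. TT A L Lam Ob n (h @ [(Mult i j, l)])))
      \<le> (case a of Answer b \<Rightarrow> Lam h * indicator Ob' (Some b)
        | Sample \<Rightarrow> (\<Sum>l\<in>L. TT A L Lam Ob' n (h @ [(Sample, l)]))
        | Mult i j \<Rightarrow> (\<Sum>l\<in>L. TT A L Lam Ob' n (h @ [(Mult i j, l)])))"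
      using sub by (cases a) (auto intro!: sum_mono ih mult_left_mono simp: indicator_def)
  qed
qed

lemma TT_total:
  assumes L: "finite L" and B: "\<And>h. \<bar>Lam h\<bar> \<le> B"
    and cS: "\<And>h'. length h' < length h + n \<Longrightarrow> (\<Sum>l\<in>L. Lam (h' @ [(Sample, l)])) = Lam h'"
    and cM: "\<And>h' i j. length h' < length h + n \<Longrightarrow> (\<Sum>l\<in>L. Lam (h' @ [(Mult i j, l)])) = Lam h'"
  shows "TT A L Lam UNIV n h = Lam h"
  using cS cM
proof (induction n arbitrary: h)
  case 0
  have "TT A L Lam UNIV 0 h = Lam h * (\<integral>a. 1 \<partial>measure_pmf (A h))"
    unfolding TT.simps
    by (rule arg_cong[where f = "\<lambda>x. Lam h * x"], rule Bochner_Integration.integral_cong)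
       (auto split: action.splits)
  then show ?case by simp
next
  case (Suc n)
  have ih: "TT A L Lam UNIV n (h @ [(a', l)]) = Lam (h @ [(a', l)])" for a' l
    by (rule Suc.IH) (use Suc.prems in auto)
  have "TT A L Lam UNIV (Suc n) h = (\<integral>a. Lam h \<partial>measure_pmf (A h))"
    unfolding TT.simps
    by (rule Bochner_Integration.integral_cong)
       (auto split: action.splits simp: ih Suc.prems)
  then show ?case by simp
qed

definition HH :: "nat \<Rightarrow> nat \<Rightarrow> (nat \<Rightarrow> int) set" where
  "HH p k = carrier (Zp_pow p k)"

lemma HH_eq: "0 < p \<Longrightarrow> HH p k = PiE {..<k} (\<lambda>_. {0..<int p})"
  by (simp add: HH_def Zp_pow_def carrier_integer_mod_group)

lemma finite_HH: "0 < p \<Longrightarrow> finite (HH p k)"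
  by (simp add: HH_eq finite_PiE)

lemma card_HH: "0 < p \<Longrightarrow> card (HH p k) = p ^ k"
  by (simp add: HH_eq card_PiE)

lemma Zp_mult: "monoid.mult (Zp_pow p k) = (\<lambda>x y. \<lambda>i\<in>{..<k}. (x i + y i) mod int p)"
  by (simp add: Zp_pow_def)

lemma group_Zp: "group (Zp_pow p k)"
  by (simp add: Zp_pow_def)

definition Gs :: "nat \<Rightarrow> nat \<Rightarrow> ((nat \<Rightarrow> int) \<Rightarrow> nat) \<Rightarrow> nat monoid" where
  "Gs p k \<sigma> = \<lparr>carrier = \<sigma> ` HH p k,
     monoid.mult = (\<lambda>x y. if x \<in> \<sigma> ` HH p k \<and> y \<in> \<sigma> ` HH p k
        then \<sigma> (inv_into (HH p k) \<sigma> x \<otimes>\<^bsub>Zp_pow p k\<^esub> inv_into (HH p k) \<sigma> y) else 0),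
     one = \<sigma> \<one>\<^bsub>Zp_pow p k\<^esub>\<rparr>"

lemma Gs_props:
  assumes inj: "inj_on \<sigma> (HH p k)"
  shows "group (Gs p k \<sigma>)" "Gs p k \<sigma> \<cong> Zp_pow p k"
proof -
  let ?Z = "Zp_pow p k"
  interpret Z: group ?Z by (rule group_Zp)
  have hom: "\<sigma> \<in> hom ?Z (Gs p k \<sigma>)"
  proof (rule homI)
    fix x assume "x \<in> carrier ?Z" then show "\<sigma> x \<in> carrier (Gs p k \<sigma>)"
      by (simp add: Gs_def HH_def)
  next
    fix x y assume xy: "x \<in> carrier ?Z" "y \<in> carrier ?Z"
    then show "\<sigma> (x \<otimes>\<^bsub>?Z\<^esub> y) = \<sigma> x \<otimes>\<^bsub>Gs p k \<sigma>\<^esub> \<sigma> y"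
      using inj by (simp add: Gs_def HH_def inv_into_f_f)
  qed
  have eq: "Gs p k \<sigma> \<lparr>carrier := \<sigma> ` carrier ?Z, one := \<sigma> \<one>\<^bsub>?Z\<^esub>\<rparr> = Gs p k \<sigma>"
    by (simp add: Gs_def HH_def)
  show grp: "group (Gs p k \<sigma>)"
    using Z.hom_imp_img_group[OF hom] eq by simp
  have "\<sigma> \<in> iso ?Z (Gs p k \<sigma>)"
    using hom inj by (auto simp: iso_def bij_betw_def Gs_def HH_def)
  then have "?Z \<cong> Gs p k \<sigma>" by (rule is_isoI)
  then show "Gs p k \<sigma> \<cong> ?Z" by (rule Z.iso_sym)
qed

fun fstep :: "nat \<Rightarrow> (nat \<Rightarrow> int) option list \<Rightarrow> nat \<Rightarrow> action \<Rightarrow> (nat \<Rightarrow> int) option" where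
  "fstep p Fs s Sample = Some (\<lambda>j. if j = s then 1 else 0)"
| "fstep p Fs s (Mult i j) = (if i < length Fs \<and> j < length Fs then
      (case (Fs ! i, Fs ! j) of (Some f, Some g) \<Rightarrow> Some (\<lambda>t. (f t + g t) mod int p) | _ \<Rightarrow> None)
     else None)"
| "fstep p Fs s (Answer b) = None"

definition stepF :: "nat \<Rightarrow> (nat \<Rightarrow> int) option list \<times> nat \<Rightarrow> action \<Rightarrow> (nat \<Rightarrow> int) option list \<times> nat" where
  "stepF p st a = (fst st @ [fstep p (fst st) (snd st) a], if a = Sample then Suc (snd st) else snd st)"

definition FS :: "nat \<Rightarrow> (action \<times> nat) list \<Rightarrow> (nat \<Rightarrow> int) option list \<times> nat" where
  "FS p h = foldl (stepF p) ([], 0) (map fst h)"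

abbreviation Fv where "Fv p h \<equiv> fst (FS p h)"
abbreviation ns where "ns p h \<equiv> snd (FS p h)"

lemma FS_Nil[simp]: "FS p [] = ([], 0)" by (simp add: FS_def)
lemma FS_snoc: "FS p (h @ [(a, l)]) = stepF p (FS p h) a" by (simp add: FS_def)

lemma length_Fv[simp]: "length (Fv p h) = length h"
  by (induction h rule: rev_induct) (auto simp: stepF_def FS_snoc)

lemma Fv_snoc[simp]: "Fv p (h @ [(a, l)]) = Fv p h @ [fstep p (Fv p h) (ns p h) a]"
  by (simp add: stepF_def FS_snoc)
lemma ns_snoc[simp]: "ns p (h @ [(a, l)]) = (if a = Sample then Suc (ns p h) else ns p h)"
  by (simp add: stepF_def FS_snoc)

definition good_vec :: "nat \<Rightarrow> nat \<Rightarrow> (nat \<Rightarrow> int) \<Rightarrow> bool" where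
  "good_vec p s f \<longleftrightarrow> (\<forall>j. 0 \<le> f j \<and> f j < int p) \<and> (\<forall>j\<ge>s. f j = 0)"

lemma Fv_good:
  assumes "1 < p" shows "i < length h \<Longrightarrow> Fv p h ! i = Some f \<Longrightarrow> good_vec p (ns p h) f"
proof (induction h arbitrary: i f rule: rev_induct)
  case Nil then show ?case by simp
next
  case (snoc e h)
  obtain a l where e: "e = (a, l)" by (cases e)
  show ?case
  proof (cases "i < length h")
    case True
    then have "Fv p h ! i = Some f" using snoc.prems by (simp add: e Fv_snoc nth_append)
    then have "good_vec p (ns p h) f" using snoc.IH True by blast
    then show ?thesis by (auto simp: e ns_snoc good_vec_def)
  next
    case False
    then have i: "i = length h" using snoc.prems by simp
    then have f: "fstep p (Fv p h) (ns p h) a = Some f" using snoc.prems by (simp add: e nth_append)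
    show ?thesis
    proof (cases a)
      case Sample then show ?thesis using f assms by (auto simp: e ns_snoc good_vec_def)
    next
      case (Answer b) then show ?thesis using f by simp
    next
      case (Mult i1 j1)
      then obtain f1 g1 where "i1 < length h" "j1 < length h" "Fv p h ! i1 = Some f1" "Fv p h ! j1 = Some g1"
        "f = (\<lambda>t. (f1 t + g1 t) mod int p)"
        using f by (auto split: if_splits option.splits)
      moreover have "good_vec p (ns p h) f1" "good_vec p (ns p h) g1"
        using snoc.IH calculation by blast+
      ultimately show ?thesis using assms by (auto simp: e ns_snoc good_vec_def Mult)
    qed
  qed
qed

definition evl :: "nat \<Rightarrow> nat \<Rightarrow> nat \<Rightarrow> (nat \<Rightarrow> int) \<Rightarrow> (nat \<Rightarrow> nat \<Rightarrow> int) \<Rightarrow> (nat \<Rightarrow> int)" where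
  "evl p k s f xs = (\<lambda>t\<in>{..<k}. (\<Sum>j<s. f j * xs j t) mod int p)"

lemma evl_in_HH: "0 < p \<Longrightarrow> evl p k s f xs \<in> HH p k"
  by (simp add: HH_eq evl_def)

lemma evl_ext:
  assumes "good_vec p s f" "s \<le> s'" shows "evl p k s' f xs = evl p k s f xs"
proof -
  have "(\<Sum>j<s'. f j * xs j t) = (\<Sum>j<s. f j * xs j t)" for t
    by (rule sum.mono_neutral_right) (use assms in \<open>auto simp: good_vec_def\<close>)
  then show ?thesis by (simp add: evl_def)
qed

lemma evl_cong: "(\<And>j. j < s \<Longrightarrow> xs j = ys j) \<Longrightarrow> evl p k s f xs = evl p k s f ys"
  by (simp add: evl_def)

lemma evl_unit:
  assumes p: "0 < p" and x: "xs s \<in> HH p k"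
  shows "evl p k (Suc s) (\<lambda>j. if j = s then 1 else 0) xs = xs s"
proof -
  have "(\<Sum>j<Suc s. (if j = s then 1 else 0) * xs j t) = xs s t" for t
    by (simp add: if_distrib sum.delta' cong: if_cong)
  moreover have "t < k \<Longrightarrow> xs s t mod int p = xs s t" for t
    using x p by (auto simp: HH_eq PiE_iff)
  moreover have "t \<notin> {..<k} \<Longrightarrow> xs s t = undefined" for t
    using x p by (auto simp: HH_eq PiE_iff extensional_def)
  ultimately show ?thesis by (auto simp: evl_def fun_eq_iff)
qed

lemma sum_mod_mult_left:
  fixes a b :: "'a \<Rightarrow> int"
  shows "(\<Sum>j\<in>J. (a j mod m) * b j) mod m = (\<Sum>j\<in>J. a j * b j) mod m"
proof -
  have "(\<Sum>j\<in>J. (a j mod m) * b j) mod m = (\<Sum>j\<in>J. ((a j mod m) * b j) mod m) mod m"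
    by (simp add: mod_sum_eq)
  also have "\<dots> = (\<Sum>j\<in>J. (a j * b j) mod m) mod m"
    by (simp add: mod_mult_left_eq)
  also have "\<dots> = (\<Sum>j\<in>J. a j * b j) mod m"
    by (simp add: mod_sum_eq)
  finally show ?thesis .
qed

lemma evl_add:
  "evl p k s (\<lambda>t. (f t + g t) mod int p) xs = evl p k s f xs \<otimes>\<^bsub>Zp_pow p k\<^esub> evl p k s g xs"
proof -
  have "(\<Sum>j<s. ((f j + g j) mod int p) * xs j t) mod int p
      = ((\<Sum>j<s. f j * xs j t) mod int p + (\<Sum>j<s. g j * xs j t) mod int p) mod int p" for t
  proof -
    have "(\<Sum>j<s. ((f j + g j) mod int p) * xs j t) mod int p = (\<Sum>j<s. (f j + g j) * xs j t) mod int p"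
      by (rule sum_mod_mult_left)
    also have "\<dots> = ((\<Sum>j<s. f j * xs j t) + (\<Sum>j<s. g j * xs j t)) mod int p"
      by (simp add: algebra_simps sum.distrib)
    also have "\<dots> = ((\<Sum>j<s. f j * xs j t) mod int p + (\<Sum>j<s. g j * xs j t) mod int p) mod int p"
      by (simp add: mod_add_eq)
    finally show ?thesis .
  qed
  then show ?thesis by (simp add: evl_def Zp_mult fun_eq_iff)
qed

definition cons :: "nat \<Rightarrow> nat \<Rightarrow> ((nat \<Rightarrow> int) \<Rightarrow> nat) \<Rightarrow> (nat \<Rightarrow> nat \<Rightarrow> int) \<Rightarrow> (action \<times> nat) list \<Rightarrow> bool" where
  "cons p k \<sigma> xs h \<longleftrightarrow> (\<forall>i<length h. snd (h ! i) =
      (case Fv p h ! i of None \<Rightarrow> 0 | Some f \<Rightarrow> \<sigma> (evl p k (ns p h) f xs)))"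

definition XX :: "nat \<Rightarrow> nat \<Rightarrow> nat \<Rightarrow> (nat \<Rightarrow> nat \<Rightarrow> int) set" where
  "XX p k s = PiE {..<s} (\<lambda>_. HH p k)"

definition cc :: "nat \<Rightarrow> nat \<Rightarrow> ((nat \<Rightarrow> int) \<Rightarrow> nat) \<Rightarrow> (action \<times> nat) list \<Rightarrow> real" where
  "cc p k \<sigma> h = real (card {xs \<in> XX p k (ns p h). cons p k \<sigma> xs h}) / (real p ^ k) ^ ns p h"

lemma cons_snoc_Sample:
  assumes p: "1 < p" and xs: "xs \<in> XX p k (Suc (ns p h))"
  shows "cons p k \<sigma> xs (h @ [(Sample, l)]) \<longleftrightarrow>
     cons p k \<sigma> (restrict xs {..<ns p h}) h \<and> l = \<sigma> (xs (ns p h))"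
proof -
  let ?s = "ns p h"
  have old: "(case Fv p h ! i of None \<Rightarrow> 0 | Some f \<Rightarrow> \<sigma> (evl p k (Suc ?s) f xs))
      = (case Fv p h ! i of None \<Rightarrow> 0 | Some f \<Rightarrow> \<sigma> (evl p k ?s f (restrict xs {..<?s})))"
    if i: "i < length h" for i
  proof (cases "Fv p h ! i")
    case None then show ?thesis by simp
  next
    case (Some f)
    then have g: "good_vec p ?s f" using Fv_good[OF p i] by blast
    have "evl p k (Suc ?s) f xs = evl p k ?s f xs" by (rule evl_ext[OF g]) simp
    also have "\<dots> = evl p k ?s f (restrict xs {..<?s})" by (rule evl_cong) simp
    finally show ?thesis using Some by simp
  qed
  have new: "evl p k (Suc ?s) (\<lambda>j. if j = ?s then 1 else 0) xs = xs ?s"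
    by (rule evl_unit) (use p xs in \<open>auto simp: XX_def\<close>)
  have snd_old: "snd ((h @ [(Sample, l)]) ! i) = snd (h ! i)" if "i < length h" for i
    using that by (simp add: nth_append)
  have fv_old: "Fv p (h @ [(Sample, l)]) ! i = Fv p h ! i" if "i < length h" for i
    using that by (simp add: nth_append)
  have snd_new: "snd ((h @ [(Sample, l)]) ! length h) = l" by simp
  have ns_eq: "ns p (h @ [(Sample, l)]) = Suc ?s" by simp
  have fv_new: "Fv p (h @ [(Sample, l)]) ! length h = Some (\<lambda>j. if j = ?s then 1 else 0)"
    by (simp add: nth_append)
  have "cons p k \<sigma> xs (h @ [(Sample, l)]) \<longleftrightarrow>
      (\<forall>i<length h. snd ((h @ [(Sample, l)]) ! i) = (case Fv p (h @ [(Sample, l)]) ! i of None \<Rightarrow> 0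
         | Some f \<Rightarrow> \<sigma> (evl p k (Suc ?s) f xs))) \<and>
      snd ((h @ [(Sample, l)]) ! length h) = (case Fv p (h @ [(Sample, l)]) ! length h of None \<Rightarrow> 0
         | Some f \<Rightarrow> \<sigma> (evl p k (Suc ?s) f xs))"
    unfolding cons_def ns_eq by (simp add: less_Suc_eq all_conj_distrib del: Fv_snoc)
  also have "\<dots> \<longleftrightarrow> cons p k \<sigma> (restrict xs {..<ns p h}) h \<and> l = \<sigma> (xs (ns p h))"
    unfolding cons_def snd_new fv_new using snd_old fv_old old new by simp
  finally show ?thesis .
qed


lemma cons_snoc_Mult:
  assumes p: "1 < p" and inj: "inj_on \<sigma> (HH p k)" and z: "0 \<notin> \<sigma> ` HH p k"
  shows "cons p k \<sigma> xs (h @ [(Mult i j, l)]) \<longleftrightarrow>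
     cons p k \<sigma> xs h \<and> l = table_resp (Gs p k \<sigma>) h i j"
proof -
  let ?s = "ns p h"
  let ?h' = "h @ [(Mult i j, l)]"
  have ns_eq: "ns p ?h' = ?s" by simp
  have snd_old: "snd (?h' ! i') = snd (h ! i')" if "i' < length h" for i'
    using that by (simp add: nth_append)
  have fv_old: "Fv p ?h' ! i' = Fv p h ! i'" if "i' < length h" for i'
    using that by (simp add: nth_append)
  have snd_new: "snd (?h' ! length h) = l" by simp
  have fv_new: "Fv p ?h' ! length h = fstep p (Fv p h) ?s (Mult i j)"
    by (simp add: nth_append del: fstep.simps)
  have "cons p k \<sigma> xs ?h' \<longleftrightarrow>
      (\<forall>i'<length h. snd (?h' ! i') = (case Fv p ?h' ! i' of None \<Rightarrow> 0
         | Some f \<Rightarrow> \<sigma> (evl p k ?s f xs))) \<and>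
      snd (?h' ! length h) = (case Fv p ?h' ! length h of None \<Rightarrow> 0
         | Some f \<Rightarrow> \<sigma> (evl p k ?s f xs))"
    unfolding cons_def ns_eq by (simp add: less_Suc_eq all_conj_distrib del: Fv_snoc)
  also have "\<dots> \<longleftrightarrow> cons p k \<sigma> xs h \<and> l = (case fstep p (Fv p h) ?s (Mult i j) of None \<Rightarrow> 0
         | Some f \<Rightarrow> \<sigma> (evl p k ?s f xs))"
    unfolding cons_def snd_new fv_new using snd_old fv_old by simp
  also have "\<dots> \<longleftrightarrow> cons p k \<sigma> xs h \<and> l = table_resp (Gs p k \<sigma>) h i j"
  proof (cases "cons p k \<sigma> xs h")
    case False then show ?thesis by simp
  next
    case True
    have lab: "snd (h ! i') = (case Fv p h ! i' of None \<Rightarrow> 0 | Some f \<Rightarrow> \<sigma> (evl p k ?s f xs))"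
      if "i' < length h" for i' using True that by (simp add: cons_def)
    have p0: "0 < p" using p by simp
    have "(case fstep p (Fv p h) ?s (Mult i j) of None \<Rightarrow> 0
         | Some f \<Rightarrow> \<sigma> (evl p k ?s f xs)) = table_resp (Gs p k \<sigma>) h i j"
    proof (cases "i < length h \<and> j < length h")
      case False then show ?thesis by (auto simp: table_resp_def)
    next
      case True
      then have ij: "i < length h" "j < length h" by auto
      show ?thesis
      proof (cases "Fv p h ! i")
        case None
        then show ?thesis using ij lab[OF ij(1)] z by (auto simp: table_resp_def Gs_def)
      next
        case (Some f)
        show ?thesis
        proof (cases "Fv p h ! j")
          case None
          then show ?thesis using ij lab[OF ij(2)] z Some by (auto simp: table_resp_def Gs_def)
        next
          case (Some g)
          have inH: "evl p k ?s f xs \<in> HH p k" "evl p k ?s g xs \<in> HH p k"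
            using evl_in_HH[OF p0] by auto
          have "table_resp (Gs p k \<sigma>) h i j = \<sigma> (evl p k ?s f xs \<otimes>\<^bsub>Zp_pow p k\<^esub> evl p k ?s g xs)"
            using ij lab[OF ij(1)] lab[OF ij(2)] \<open>Fv p h ! i = Some f\<close> Some inH inj
            by (simp add: table_resp_def Gs_def inv_into_f_f)
          also have "\<dots> = \<sigma> (evl p k ?s (\<lambda>t. (f t + g t) mod int p) xs)"
            by (simp add: evl_add)
          finally show ?thesis using ij \<open>Fv p h ! i = Some f\<close> Some by simp
        qed
      qed
    qed
    then show ?thesis by simp
  qed
  finally show ?thesis .
qed

lemma card_XX: "0 < p \<Longrightarrow> card (XX p k s) = (p ^ k) ^ s"
  by (simp add: XX_def card_PiE card_HH finite_HH)

lemma finite_XX: "0 < p \<Longrightarrow> finite (XX p k s)"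
  by (simp add: XX_def finite_PiE finite_HH)

lemma cc_Mult:
  assumes p: "1 < p" and inj: "inj_on \<sigma> (HH p k)" and z: "0 \<notin> \<sigma> ` HH p k"
  shows "cc p k \<sigma> (h @ [(Mult i j, l)]) = cc p k \<sigma> h * (if l = table_resp (Gs p k \<sigma>) h i j then 1 else 0)"
  unfolding cc_def using cons_snoc_Mult[OF assms] by simp

lemma cc_Sample:
  assumes p: "1 < p" and inj: "inj_on \<sigma> (HH p k)"
  shows "cc p k \<sigma> (h @ [(Sample, l)]) = cc p k \<sigma> h * (if l \<in> \<sigma> ` HH p k then 1 else 0) / real (p ^ k)"
proof -
  let ?s = "ns p h"
  have p0: "0 < p" using p by simp
  let ?A = "{xs \<in> XX p k ?s. cons p k \<sigma> xs h}"
  let ?B = "{x \<in> HH p k. \<sigma> x = l}"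
  let ?C = "{xs \<in> XX p k (Suc ?s). cons p k \<sigma> xs (h @ [(Sample, l)])}"
  have C: "?C = (\<lambda>(ys, x). ys(?s := x)) ` (?A \<times> ?B)"
  proof (intro equalityI subsetI)
    fix xs assume xs: "xs \<in> ?C"
    then have x1: "xs \<in> XX p k (Suc ?s)" and c: "cons p k \<sigma> (restrict xs {..<?s}) h" "l = \<sigma> (xs ?s)"
      using cons_snoc_Sample[OF p] by auto
    have "restrict xs {..<?s} \<in> XX p k ?s" using x1 by (auto simp: XX_def PiE_iff)
    moreover have "xs ?s \<in> HH p k" using x1 by (auto simp: XX_def PiE_iff)
    moreover have "xs = (restrict xs {..<?s})(?s := xs ?s)"
      using x1 by (auto simp: XX_def PiE_iff fun_eq_iff extensional_def)
    ultimately show "xs \<in> (\<lambda>(ys, x). ys(?s := x)) ` (?A \<times> ?B)"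
      using c by (auto intro!: image_eqI[where x="(restrict xs {..<?s}, xs ?s)"])
  next
    fix xs assume "xs \<in> (\<lambda>(ys, x). ys(?s := x)) ` (?A \<times> ?B)"
    then obtain ys x where ys: "ys \<in> ?A" and x: "x \<in> ?B" and xs: "xs = ys(?s := x)" by auto
    have x1: "xs \<in> XX p k (Suc ?s)" using ys x xs by (auto simp: XX_def PiE_iff extensional_def)
    have "restrict xs {..<?s} = ys" using ys xs by (auto simp: XX_def PiE_iff fun_eq_iff extensional_def)
    then show "xs \<in> ?C" using x1 cons_snoc_Sample[OF p x1] ys x xs by auto
  qed
  have inj2: "inj_on (\<lambda>(ys, x). ys(?s := x)) (?A \<times> ?B)"
  proof (rule inj_onI)
    fix u v assume u: "u \<in> ?A \<times> ?B" and v: "v \<in> ?A \<times> ?B"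
      and e0: "(\<lambda>(ys, x). ys(?s := x)) u = (\<lambda>(ys, x). ys(?s := x)) v"
    obtain ys x where uu: "u = (ys, x)" by (cases u)
    obtain ys' x' where vv: "v = (ys', x')" by (cases v)
    have a: "ys \<in> ?A" "x \<in> ?B" "ys' \<in> ?A" "x' \<in> ?B" using u v uu vv by auto
    have e: "ys(?s := x) = ys'(?s := x')" using e0 uu vv by simp
    have "x = x'" using fun_cong[OF e, of ?s] by simp
    moreover have "ys = ys'"
    proof
      fix j show "ys j = ys' j"
        using fun_cong[OF e, of j] a by (cases "j = ?s") (auto simp: XX_def PiE_iff extensional_def)
    qed
    ultimately show "u = v" using uu vv by simp
  qed
  have cB: "card ?B = (if l \<in> \<sigma> ` HH p k then 1 else 0)"
  proof (cases "l \<in> \<sigma> ` HH p k")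
    case True
    then obtain x where x: "x \<in> HH p k" "\<sigma> x = l" by auto
    then have "?B = {x}" using inj by (auto simp: inj_on_def)
    then show ?thesis using True by simp
  next
    case False then have "?B = {}" by auto
    then show ?thesis using False by (simp only: card.empty) simp
  qed
  have fin: "finite ?A" "finite ?B" using finite_XX[OF p0] finite_HH[OF p0] by auto
  have "card ?C = card ?A * card ?B"
    unfolding C by (simp add: card_image[OF inj2] card_cartesian_product)
  then show ?thesis
    unfolding cc_def using cB by (simp add: field_simps)
qed


lemma table_resp_in:
  "table_resp (Gs p k \<sigma>) h i j \<in> insert 0 (\<sigma> ` HH p k)"
proof -
  interpret Z: group "Zp_pow p k" by (rule group_Zp)
  have "x \<in> \<sigma> ` HH p k \<Longrightarrow> y \<in> \<sigma> ` HH p k \<Longrightarrow>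
     inv_into (HH p k) \<sigma> x \<otimes>\<^bsub>Zp_pow p k\<^esub> inv_into (HH p k) \<sigma> y \<in> HH p k" for x y
    unfolding HH_def by (intro Z.m_closed) (auto intro: inv_into_into simp: HH_def[symmetric])
  then show ?thesis by (auto simp: table_resp_def Gs_def)
qed

lemma link:
  assumes p: "1 < p" and inj: "inj_on \<sigma> (HH p k)" and z: "0 \<notin> \<sigma> ` HH p k"
    and L: "finite L" "0 \<in> L" "\<sigma> ` HH p k \<subseteq> L"
  shows "TT A L (cc p k \<sigma>) Ob n h = cc p k \<sigma> h * measure_pmf.prob (exec (Gs p k \<sigma>) A n h) Ob"
proof (induction n arbitrary: h)
  case 0
  have "measure_pmf.prob (exec (Gs p k \<sigma>) A 0 h) Ob =
     (\<integral>a. (case a of Answer b \<Rightarrow> indicator Ob (Some b)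
        | Sample \<Rightarrow> indicator Ob None | Mult i j \<Rightarrow> indicator Ob None) \<partial>measure_pmf (A h))"
    unfolding exec.simps prob_bind_pmf
    by (rule Bochner_Integration.integral_cong) (auto split: action.splits)
  then show ?case by simp
next
  case (Suc n)
  let ?G = "Gs p k \<sigma>"
  have p0: "0 < p" using p by simp
  have cardG: "card (\<sigma> ` HH p k) = p ^ k" using card_image[OF inj] card_HH[OF p0] by simp
  have finG: "finite (\<sigma> ` HH p k)" using finite_HH[OF p0] by simp
  have neG: "\<sigma> ` HH p k \<noteq> {}" using cardG p0 by auto
  have "cc p k \<sigma> h * measure_pmf.prob (exec ?G A (Suc n) h) Ob =
     cc p k \<sigma> h * (\<integral>a. measure_pmf.prob (case a of
        Answer b \<Rightarrow> return_pmf (Some b)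
      | Sample \<Rightarrow> pmf_of_set (carrier ?G) \<bind> (\<lambda>x. exec ?G A n (h @ [(Sample, x)]))
      | Mult i j \<Rightarrow> exec ?G A n (h @ [(Mult i j, table_resp ?G h i j)])) Ob \<partial>measure_pmf (A h))"
    by (simp only: exec.simps prob_bind_pmf)
  also have "\<dots> = (\<integral>a. cc p k \<sigma> h * measure_pmf.prob (case a of
        Answer b \<Rightarrow> return_pmf (Some b)
      | Sample \<Rightarrow> pmf_of_set (carrier ?G) \<bind> (\<lambda>x. exec ?G A n (h @ [(Sample, x)]))
      | Mult i j \<Rightarrow> exec ?G A n (h @ [(Mult i j, table_resp ?G h i j)])) Ob \<partial>measure_pmf (A h))"
    by (simp only: integral_mult_right_zero)
  also have "\<dots> = TT A L (cc p k \<sigma>) Ob (Suc n) h"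
    unfolding TT.simps
  proof (rule Bochner_Integration.integral_cong[OF refl])
    fix a show "cc p k \<sigma> h * measure_pmf.prob (case a of
        Answer b \<Rightarrow> return_pmf (Some b)
      | Sample \<Rightarrow> pmf_of_set (carrier ?G) \<bind> (\<lambda>x. exec ?G A n (h @ [(Sample, x)]))
      | Mult i j \<Rightarrow> exec ?G A n (h @ [(Mult i j, table_resp ?G h i j)])) Ob =
      (case a of Answer b \<Rightarrow> cc p k \<sigma> h * indicator Ob (Some b)
        | Sample \<Rightarrow> (\<Sum>l\<in>L. TT A L (cc p k \<sigma>) Ob n (h @ [(Sample, l)]))
        | Mult i j \<Rightarrow> (\<Sum>l\<in>L. TT A L (cc p k \<sigma>) Ob n (h @ [(Mult i j, l)])))"
    proof (cases a)
      case (Answer b) then show ?thesis by simp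
    next
      case Sample
      have "cc p k \<sigma> h * measure_pmf.prob (pmf_of_set (carrier ?G) \<bind> (\<lambda>x. exec ?G A n (h @ [(Sample, x)]))) Ob
        = cc p k \<sigma> h * ((\<Sum>x\<in>\<sigma> ` HH p k. measure_pmf.prob (exec ?G A n (h @ [(Sample, x)])) Ob) / real (p ^ k))"
        unfolding prob_bind_pmf
        by (simp add: Gs_def integral_pmf_of_set[OF neG finG] cardG)
      also have "\<dots> = (\<Sum>x\<in>\<sigma> ` HH p k. cc p k \<sigma> (h @ [(Sample, x)]) * measure_pmf.prob (exec ?G A n (h @ [(Sample, x)])) Ob)"
        by (simp add: cc_Sample[OF p inj] sum_divide_distrib sum_distrib_left)
      also have "\<dots> = (\<Sum>l\<in>L. cc p k \<sigma> (h @ [(Sample, l)]) * measure_pmf.prob (exec ?G A n (h @ [(Sample, l)])) Ob)"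
        by (rule sum.mono_neutral_left) (use L in \<open>auto simp: cc_Sample[OF p inj]\<close>)
      also have "\<dots> = (\<Sum>l\<in>L. TT A L (cc p k \<sigma>) Ob n (h @ [(Sample, l)]))"
        by (simp add: Suc.IH)
      finally show ?thesis using Sample by simp
    next
      case (Mult i j)
      let ?r = "table_resp ?G h i j"
      have rL: "?r \<in> L" using table_resp_in[of p k \<sigma> h i j] L by auto
      have "(\<Sum>l\<in>L. TT A L (cc p k \<sigma>) Ob n (h @ [(Mult i j, l)]))
          = (\<Sum>l\<in>L. (if l = ?r then cc p k \<sigma> h * measure_pmf.prob (exec ?G A n (h @ [(Mult i j, ?r)])) Ob else 0))"
        by (rule sum.cong[OF refl]) (simp add: Suc.IH cc_Mult[OF p inj z])
      also have "\<dots> = cc p k \<sigma> h * measure_pmf.prob (exec ?G A n (h @ [(Mult i j, ?r)])) Ob"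
        using rL L by (simp add: sum.delta')
      finally show ?thesis using Mult by simp
    qed
  qed
  finally show ?case by simp
qed

lemma count_inj_fix:
  fixes v :: "'i \<Rightarrow> 'a" and l :: "'i \<Rightarrow> 'b"
  assumes finA: "finite A" and finB: "finite B" and vA: "v ` I \<subseteq> A"
  shows "card {\<sigma> \<in> A \<rightarrow>\<^sub>E B. inj_on \<sigma> A \<and> (\<forall>i\<in>I. \<sigma> (v i) = l i)} =
    (if (\<forall>i\<in>I. \<forall>i'\<in>I. v i = v i' \<longleftrightarrow> l i = l i') \<and> l ` I \<subseteq> B
     then prod ((-) (card B - card (l ` I))) {0..<card A - card (l ` I)} else 0)"
proof (cases "(\<forall>i\<in>I. \<forall>i'\<in>I. v i = v i' \<longleftrightarrow> l i = l i') \<and> l ` I \<subseteq> B")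
  case False
  have "{\<sigma> \<in> A \<rightarrow>\<^sub>E B. inj_on \<sigma> A \<and> (\<forall>i\<in>I. \<sigma> (v i) = l i)} = {}"
  proof (rule ccontr)
    assume "\<not> ?thesis"
    then obtain \<sigma> where s: "\<sigma> \<in> A \<rightarrow>\<^sub>E B" "inj_on \<sigma> A" "\<forall>i\<in>I. \<sigma> (v i) = l i" by auto
    have "\<forall>i\<in>I. \<forall>i'\<in>I. v i = v i' \<longleftrightarrow> l i = l i'"
    proof (intro ballI)
      fix i i' assume i: "i \<in> I" "i' \<in> I"
      then have "v i \<in> A" "v i' \<in> A" using vA by auto
      then show "v i = v i' \<longleftrightarrow> l i = l i'" using s i by (metis inj_on_contraD)
    qed
    moreover have "l ` I \<subseteq> B" using s vA by (force simp: PiE_iff)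
    ultimately show False using False by simp
  qed
  then have "card {\<sigma> \<in> A \<rightarrow>\<^sub>E B. inj_on \<sigma> A \<and> (\<forall>i\<in>I. \<sigma> (v i) = l i)} = 0"
    by (simp only: card.empty)
  then show ?thesis using False by (subst if_not_P) simp_all
next
  case True
  then have pat: "\<And>i i'. i \<in> I \<Longrightarrow> i' \<in> I \<Longrightarrow> v i = v i' \<longleftrightarrow> l i = l i'"
    and lB: "l ` I \<subseteq> B" by auto
  define U where "U = v ` I"
  define phi where "phi a = l (SOME i. i \<in> I \<and> v i = a)" for a
  have phi: "i \<in> I \<Longrightarrow> phi (v i) = l i" for i
  proof -
    assume i: "i \<in> I"
    then have "\<exists>i'. i' \<in> I \<and> v i' = v i" by blast
    then have "(SOME i'. i' \<in> I \<and> v i' = v i) \<in> I \<and> v (SOME i'. i' \<in> I \<and> v i' = v i) = v i"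
      by (rule someI_ex)
    then show ?thesis unfolding phi_def using pat i by blast
  qed
  have phiU: "phi ` U = l ` I" unfolding U_def using phi by (force simp: image_iff)
  have injphi: "inj_on phi U"
    unfolding U_def inj_on_def using phi pat by fastforce
  have cardU: "card U = card (l ` I)" using card_image[OF injphi] phiU by simp
  have UA: "U \<subseteq> A" using vA U_def by simp
  define X where "X = {\<sigma> \<in> A \<rightarrow>\<^sub>E B. inj_on \<sigma> A \<and> (\<forall>i\<in>I. \<sigma> (v i) = l i)}"
  define Y where "Y = {f \<in> (A - U) \<rightarrow>\<^sub>E (B - l ` I). inj_on f (A - U)}"
  have Xphi: "\<sigma> \<in> X \<Longrightarrow> a \<in> U \<Longrightarrow> \<sigma> a = phi a" for \<sigma> a
    unfolding X_def U_def using phi by auto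
  have bij: "bij_betw (\<lambda>\<sigma>. restrict \<sigma> (A - U)) X Y"
  proof (rule bij_betw_imageI)
    show "inj_on (\<lambda>\<sigma>. restrict \<sigma> (A - U)) X"
    proof (rule inj_onI)
      fix \<sigma> \<tau> assume s: "\<sigma> \<in> X" "\<tau> \<in> X" and e: "restrict \<sigma> (A - U) = restrict \<tau> (A - U)"
      show "\<sigma> = \<tau>"
      proof
        fix a show "\<sigma> a = \<tau> a"
        proof (cases "a \<in> A")
          case False then show ?thesis using s by (auto simp: X_def PiE_iff extensional_def)
        next
          case True
          show ?thesis
          proof (cases "a \<in> U")
            case True then show ?thesis using Xphi[OF s(1) True] Xphi[OF s(2) True] by simp
          next
            case False then show ?thesis using fun_cong[OF e, of a] \<open>a \<in> A\<close> by simp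
          qed
        qed
      qed
    qed
    show "(\<lambda>\<sigma>. restrict \<sigma> (A - U)) ` X = Y"
    proof (intro equalityI subsetI)
      fix f assume "f \<in> (\<lambda>\<sigma>. restrict \<sigma> (A - U)) ` X"
      then obtain \<sigma> where s: "\<sigma> \<in> X" and f: "f = restrict \<sigma> (A - U)" by auto
      have "\<sigma> a \<notin> l ` I" if a: "a \<in> A - U" for a
      proof
        assume "\<sigma> a \<in> l ` I"
        then obtain i where i: "i \<in> I" "\<sigma> a = l i" by auto
        then have "\<sigma> (v i) = \<sigma> a" using s by (auto simp: X_def)
        moreover have "v i \<in> A" using vA i by auto
        ultimately have "v i = a" using s a by (auto simp: X_def inj_on_def)
        then show False using a i U_def by auto
      qed
      then show "f \<in> Y" using s f by (auto simp: X_def Y_def PiE_iff inj_on_def)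
    next
      fix f assume f: "f \<in> Y"
      define \<sigma> where "\<sigma> = (\<lambda>a\<in>A. if a \<in> U then phi a else f a)"
      have inB: "\<sigma> \<in> A \<rightarrow>\<^sub>E B"
        using f phiU lB by (auto simp: \<sigma>_def Y_def PiE_iff)
      have inj: "inj_on \<sigma> A"
      proof (rule inj_onI)
        fix a b assume ab: "a \<in> A" "b \<in> A" "\<sigma> a = \<sigma> b"
        show "a = b"
        proof (cases "a \<in> U"; cases "b \<in> U")
          assume "a \<in> U" "b \<in> U" then show ?thesis using ab injphi by (auto simp: \<sigma>_def inj_on_def)
        next
          assume "a \<in> U" "b \<notin> U"
          then have "phi a \<in> l ` I" "f b \<notin> l ` I" using phiU f ab by (auto simp: Y_def PiE_iff)
          then show ?thesis using ab \<open>a \<in> U\<close> \<open>b \<notin> U\<close> by (auto simp: \<sigma>_def)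
        next
          assume "a \<notin> U" "b \<in> U"
          then have "phi b \<in> l ` I" "f a \<notin> l ` I" using phiU f ab by (auto simp: Y_def PiE_iff)
          then show ?thesis using ab \<open>a \<notin> U\<close> \<open>b \<in> U\<close> by (auto simp: \<sigma>_def)
        next
          assume "a \<notin> U" "b \<notin> U" then show ?thesis using ab f by (auto simp: \<sigma>_def Y_def inj_on_def)
        qed
      qed
      have fix_: "\<forall>i\<in>I. \<sigma> (v i) = l i" using phi vA by (auto simp: \<sigma>_def U_def)
      have "\<sigma> \<in> X" using inB inj fix_ by (simp add: X_def)
      moreover have "restrict \<sigma> (A - U) = f"
        using f by (auto simp: \<sigma>_def Y_def PiE_iff extensional_def fun_eq_iff)
      ultimately show "f \<in> (\<lambda>\<sigma>. restrict \<sigma> (A - U)) ` X" by force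
    qed
  qed
  have "card X = card Y" using bij_betw_same_card[OF bij] .
  also have "card Y = card (B - l ` I) ^ (card (A - U) - card (A - U)) *
      prod ((-) (card (B - l ` I))) {0..<card (A - U)}"
    unfolding Y_def by (rule card_inj_on_subset_funcset) (use finA finB in auto)
  also have "card (A - U) = card A - card (l ` I)"
    using card_Diff_subset[OF finite_subset[OF UA finA] UA] cardU by simp
  also have "card (B - l ` I) = card B - card (l ` I)"
    using card_Diff_subset[OF finite_subset[OF lB finB] lB] by simp
  finally show ?thesis using True X_def by simp
qed

lemma prod_split_ff:
  assumes "D \<le> N"
  shows "prod ((-) (M::nat)) {0..<N} = prod ((-) M) {0..<D} * prod ((-) (M - D)) {0..<N - D}"
proof -
  have "prod ((-) M) {0..<N} = prod ((-) M) {0..<D} * prod ((-) M) {D..<N}"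
    using prod.atLeastLessThan_concat[of 0 D N "(-) M"] assms by simp
  also have "prod ((-) M) {D..<N} = prod (\<lambda>j. M - (j + D)) {0..<N - D}"
    using prod.shift_bounds_nat_ivl[of "(-) M" 0 D "N - D"] assms by simp
  also have "\<dots> = prod ((-) (M - D)) {0..<N - D}"
    by (rule prod.cong) auto
  finally show ?thesis .
qed

lemma int_dvd_small:
  fixes x :: int
  assumes "int p dvd x" "\<bar>x\<bar> < int p" shows "x = 0"
  using dvd_imp_le_int[of x "int p"] assms by force

lemma collision:
  assumes pr: "prime p" and gf: "good_vec p s f" and gg: "good_vec p s g" and fg: "f \<noteq> g"
  shows "card {xs \<in> XX p k s. evl p k s f xs = evl p k s g xs} \<le> (p ^ k) ^ (s - 1)"
proof -
  have p0: "0 < p" using pr prime_gt_0_nat by blast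
  have pi: "prime (int p)" using pr by simp
  obtain j where j: "f j \<noteq> g j" using fg by auto
  have js: "j < s"
  proof (rule ccontr)
    assume "\<not> j < s"
    then have "f j = 0" "g j = 0" using gf gg by (auto simp: good_vec_def)
    then show False using j by simp
  qed
  let ?J = "{..<s} - {j}"
  let ?Y = "PiE ?J (\<lambda>_. HH p k)"
  let ?E = "{xs \<in> XX p k s. evl p k s f xs = evl p k s g xs}"
  have d: "\<not> int p dvd (f j - g j)"
  proof
    assume "int p dvd (f j - g j)"
    moreover have "\<bar>f j - g j\<bar> < int p"
    proof -
      have "0 \<le> f j" "f j < int p" "0 \<le> g j" "g j < int p" using gf gg by (auto simp: good_vec_def)
      then show ?thesis by linarith
    qed
    ultimately have "f j - g j = 0" by (rule int_dvd_small)
    then show False using j by simp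
  qed
  have dv: "int p dvd (\<Sum>i<s. (f i - g i) * xs i t)" if xs: "xs \<in> ?E" and t: "t < k" for xs t
  proof -
    have "evl p k s f xs t = evl p k s g xs t" using xs by simp
    then have "(\<Sum>i<s. f i * xs i t) mod int p = (\<Sum>i<s. g i * xs i t) mod int p"
      using t by (simp add: evl_def)
    then have "int p dvd ((\<Sum>i<s. f i * xs i t) - (\<Sum>i<s. g i * xs i t))"
      by (simp add: mod_eq_dvd_iff)
    also have "(\<Sum>i<s. f i * xs i t) - (\<Sum>i<s. g i * xs i t) = (\<Sum>i<s. (f i - g i) * xs i t)"
      by (simp add: sum_subtractf[symmetric] algebra_simps)
    finally show ?thesis .
  qed
  have inj: "inj_on (\<lambda>xs. restrict xs ?J) ?E"
  proof (rule inj_onI)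
    fix xs ys assume xs: "xs \<in> ?E" and ys: "ys \<in> ?E" and e: "restrict xs ?J = restrict ys ?J"
    have same: "i < s \<Longrightarrow> i \<noteq> j \<Longrightarrow> xs i = ys i" for i using fun_cong[OF e, of i] by simp
    have xj: "xs j t = ys j t" for t
    proof (cases "t < k")
      case True
      have "int p dvd ((\<Sum>i<s. (f i - g i) * xs i t) - (\<Sum>i<s. (f i - g i) * ys i t))"
        using dv[OF xs True] dv[OF ys True] by (rule dvd_diff)
      also have "(\<Sum>i<s. (f i - g i) * xs i t) - (\<Sum>i<s. (f i - g i) * ys i t)
          = (\<Sum>i<s. (f i - g i) * (xs i t - ys i t))"
        by (simp add: sum_subtractf[symmetric] algebra_simps)
      also have "\<dots> = (f j - g j) * (xs j t - ys j t)"
      proof -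
        have "(\<Sum>i<s. (f i - g i) * (xs i t - ys i t)) = (f j - g j) * (xs j t - ys j t)
            + (\<Sum>i\<in>{..<s} - {j}. (f i - g i) * (xs i t - ys i t))"
          using js by (subst sum.remove[of _ j]) auto
        also have "(\<Sum>i\<in>{..<s} - {j}. (f i - g i) * (xs i t - ys i t)) = 0"
          by (rule sum.neutral) (use same in auto)
        finally show ?thesis by simp
      qed
      finally have "int p dvd (f j - g j) * (xs j t - ys j t)" .
      then have "int p dvd (xs j t - ys j t)" using d pi by (simp add: prime_dvd_mult_iff)
      moreover have "xs j \<in> HH p k" "ys j \<in> HH p k" using xs ys js by (auto simp: XX_def PiE_iff)
      then have "0 \<le> xs j t \<and> xs j t < int p" "0 \<le> ys j t \<and> ys j t < int p"
        using True p0 by (auto simp: HH_eq PiE_iff)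
      then have "\<bar>xs j t - ys j t\<bar> < int p" by linarith
      ultimately have "xs j t - ys j t = 0" by (rule int_dvd_small)
      then show ?thesis by simp
    next
      case False
      have "xs j \<in> HH p k" "ys j \<in> HH p k" using xs ys js by (auto simp: XX_def PiE_iff)
      then show ?thesis using False p0 by (auto simp: HH_eq PiE_iff extensional_def)
    qed
    show "xs = ys"
    proof
      fix i show "xs i = ys i"
      proof (cases "i < s")
        case True then show ?thesis using same xj by (cases "i = j") auto
      next
        case False then show ?thesis using xs ys by (auto simp: XX_def PiE_iff extensional_def)
      qed
    qed
  qed
  have sub: "(\<lambda>xs. restrict xs ?J) ` ?E \<subseteq> ?Y" by (auto simp: XX_def PiE_iff split: if_splits)
  have "card ?E \<le> card ?Y"
    by (rule card_inj_on_le[OF inj sub]) (simp add: finite_PiE finite_HH p0)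
  also have "card ?Y = (p ^ k) ^ (s - 1)"
    using js by (simp add: card_PiE card_HH p0)
  finally show ?thesis .
qed


definition NJ :: "nat \<Rightarrow> (action \<times> nat) list \<Rightarrow> nat set" where
  "NJ p h = {i. i < length h \<and> Fv p h ! i \<noteq> None}"
definition LS :: "nat \<Rightarrow> (action \<times> nat) list \<Rightarrow> nat set" where
  "LS p h = (\<lambda>i. snd (h ! i)) ` NJ p h"
definition Jz :: "nat \<Rightarrow> (action \<times> nat) list \<Rightarrow> bool" where
  "Jz p h \<longleftrightarrow> (\<forall>i<length h. Fv p h ! i = None \<longrightarrow> snd (h ! i) = 0)"
definition goodh :: "nat \<Rightarrow> (action \<times> nat) list \<Rightarrow> bool" where
  "goodh p h \<longleftrightarrow> (\<forall>i\<in>NJ p h. \<forall>i'\<in>NJ p h. (Fv p h ! i = Fv p h ! i') \<longleftrightarrow> (snd (h ! i) = snd (h ! i')))"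
definition ffr :: "nat \<Rightarrow> nat \<Rightarrow> real" where
  "ffr M D = real (prod ((-) M) {0..<D})"
definition Lam0 :: "nat \<Rightarrow> nat \<Rightarrow> (action \<times> nat) list \<Rightarrow> real" where
  "Lam0 p M h = (if Jz p h \<and> LS p h \<subseteq> {1..M} \<and> goodh p h then 1 / ffr M (card (LS p h)) else 0)"
definition Inj :: "nat \<Rightarrow> nat \<Rightarrow> nat \<Rightarrow> ((nat \<Rightarrow> int) \<Rightarrow> nat) set" where
  "Inj p k M = {\<sigma> \<in> HH p k \<rightarrow>\<^sub>E {1..M}. inj_on \<sigma> (HH p k)}"
definition Lamk :: "nat \<Rightarrow> nat \<Rightarrow> nat \<Rightarrow> (action \<times> nat) list \<Rightarrow> real" where
  "Lamk p k M h = (\<Sum>\<sigma>\<in>Inj p k M. cc p k \<sigma> h) / real (card (Inj p k M))"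
definition patok :: "nat \<Rightarrow> nat \<Rightarrow> (action \<times> nat) list \<Rightarrow> (nat \<Rightarrow> nat \<Rightarrow> int) \<Rightarrow> bool" where
  "patok p k h xs \<longleftrightarrow> (\<forall>i\<in>NJ p h. \<forall>i'\<in>NJ p h.
     (evl p k (ns p h) (the (Fv p h ! i)) xs = evl p k (ns p h) (the (Fv p h ! i')) xs)
       \<longleftrightarrow> (snd (h ! i) = snd (h ! i')))"

lemma finite_NJ: "finite (NJ p h)" by (simp add: NJ_def)

lemma cons_iff:
  "cons p k \<sigma> xs h \<longleftrightarrow> Jz p h \<and>
     (\<forall>i\<in>NJ p h. \<sigma> (evl p k (ns p h) (the (Fv p h ! i)) xs) = snd (h ! i))"
  unfolding cons_def Jz_def NJ_def
  by (auto split: option.splits)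

lemma card_Inj:
  assumes p0: "0 < p" and NM: "p ^ k \<le> M"
  shows "card (Inj p k M) = prod ((-) M) {0..<p ^ k}"
  using count_inj_fix[where A="HH p k" and B="{1..M}" and I="{}::nat set" and v="\<lambda>i. undefined" and l="\<lambda>i. (0::nat)"]
    finite_HH[OF p0] card_HH[OF p0]
  by (simp add: Inj_def)

lemma count_cons:
  assumes p0: "0 < p"
  shows "card {\<sigma> \<in> Inj p k M. cons p k \<sigma> xs h} =
    (if Jz p h \<and> patok p k h xs \<and> LS p h \<subseteq> {1..M}
     then prod ((-) (M - card (LS p h))) {0..<p ^ k - card (LS p h)} else 0)"
proof (cases "Jz p h")
  case False
  then have "{\<sigma> \<in> Inj p k M. cons p k \<sigma> xs h} = {}" by (auto simp: cons_iff)
  then show ?thesis using False by (simp only: card.empty) simp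
next
  case True
  let ?v = "\<lambda>i. evl p k (ns p h) (the (Fv p h ! i)) xs"
  let ?l = "\<lambda>i. snd (h ! i)"
  have eq: "{\<sigma> \<in> Inj p k M. cons p k \<sigma> xs h} =
     {\<sigma> \<in> HH p k \<rightarrow>\<^sub>E {1..M}. inj_on \<sigma> (HH p k) \<and> (\<forall>i\<in>NJ p h. \<sigma> (?v i) = ?l i)}"
    using True by (auto simp: Inj_def cons_iff)
  have "card {\<sigma> \<in> HH p k \<rightarrow>\<^sub>E {1..M}. inj_on \<sigma> (HH p k) \<and> (\<forall>i\<in>NJ p h. \<sigma> (?v i) = ?l i)} =
    (if (\<forall>i\<in>NJ p h. \<forall>i'\<in>NJ p h. ?v i = ?v i' \<longleftrightarrow> ?l i = ?l i') \<and> ?l ` NJ p h \<subseteq> {1..M}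
     then prod ((-) (card {1..M} - card (?l ` NJ p h))) {0..<card (HH p k) - card (?l ` NJ p h)} else 0)"
    by (rule count_inj_fix) (use finite_HH[OF p0] evl_in_HH[OF p0] in auto)
  then show ?thesis using True eq card_HH[OF p0]
    by (simp add: patok_def LS_def)
qed

lemma card_filter_sum: "finite X \<Longrightarrow> card {x \<in> X. P x} = (\<Sum>x\<in>X. if P x then 1 else (0::nat))"
  by (simp add: sum.If_cases Int_def)

lemma Lamk_closed:
  assumes p0: "0 < p" and NM: "p ^ k \<le> M" and D: "card (LS p h) \<le> p ^ k"
  shows "Lamk p k M h = (if Jz p h \<and> LS p h \<subseteq> {1..M} then
      real (card {xs \<in> XX p k (ns p h). patok p k h xs}) / (real p ^ k) ^ ns p h / ffr M (card (LS p h))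
     else 0)"
proof -
  let ?X = "XX p k (ns p h)"
  let ?D = "card (LS p h)"
  let ?CD = "prod ((-) (M - ?D)) {0..<p ^ k - ?D}"
  have finX: "finite ?X" using finite_XX[OF p0] .
  have finI: "finite (Inj p k M)" unfolding Inj_def
    by (rule finite_subset[of _ "HH p k \<rightarrow>\<^sub>E {1..M}"]) (auto intro: finite_PiE finite_HH[OF p0])
  have "(\<Sum>\<sigma>\<in>Inj p k M. card {xs \<in> ?X. cons p k \<sigma> xs h})
      = (\<Sum>\<sigma>\<in>Inj p k M. \<Sum>xs\<in>?X. if cons p k \<sigma> xs h then 1 else 0)"
    using finX by (simp add: card_filter_sum)
  also have "\<dots> = (\<Sum>xs\<in>?X. \<Sum>\<sigma>\<in>Inj p k M. if cons p k \<sigma> xs h then 1 else 0)"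
    by (rule sum.swap)
  also have "\<dots> = (\<Sum>xs\<in>?X. card {\<sigma> \<in> Inj p k M. cons p k \<sigma> xs h})"
    using finI by (simp add: card_filter_sum)
  also have "\<dots> = (\<Sum>xs\<in>?X. if Jz p h \<and> patok p k h xs \<and> LS p h \<subseteq> {1..M} then ?CD else 0)"
    by (simp add: count_cons[OF p0])
  also have "\<dots> = (if Jz p h \<and> LS p h \<subseteq> {1..M} then card {xs \<in> ?X. patok p k h xs} * ?CD else 0)"
    using finX by (auto simp: sum.If_cases Int_def)
  finally have S: "(\<Sum>\<sigma>\<in>Inj p k M. card {xs \<in> ?X. cons p k \<sigma> xs h}) =
     (if Jz p h \<and> LS p h \<subseteq> {1..M} then card {xs \<in> ?X. patok p k h xs} * ?CD else 0)" .
  have C0: "card (Inj p k M) = prod ((-) M) {0..<?D} * ?CD"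
    using card_Inj[OF p0 NM] prod_split_ff[OF D] by simp
  have CDpos: "0 < ?CD" using NM D by (auto intro!: prod_pos)
  have ffpos: "0 < prod ((-) M) {0..<?D}" using NM D by (auto intro!: prod_pos)
  have "Lamk p k M h = real (\<Sum>\<sigma>\<in>Inj p k M. card {xs \<in> ?X. cons p k \<sigma> xs h}) / (real p ^ k) ^ ns p h
      / real (card (Inj p k M))"
    unfolding Lamk_def cc_def by (simp add: sum_divide_distrib)
  also have "\<dots> = (if Jz p h \<and> LS p h \<subseteq> {1..M} then
      real (card {xs \<in> ?X. patok p k h xs}) / (real p ^ k) ^ ns p h / ffr M ?D else 0)"
    unfolding S C0 ffr_def using CDpos ffpos by (auto simp: field_simps)
  finally show ?thesis .
qed

lemma Fv_snoc_old: "i < length h \<Longrightarrow> Fv p (h @ [(a, l)]) ! i = Fv p h ! i"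
  by (simp add: nth_append)
lemma Fv_snoc_new: "Fv p (h @ [(a, l)]) ! length h = fstep p (Fv p h) (ns p h) a"
  by (simp add: nth_append del: fstep.simps)
lemma snd_snoc_old: "i < length h \<Longrightarrow> snd ((h @ [(a, l)]) ! i) = snd (h ! i)"
  by (simp add: nth_append)

lemma NJ_snoc: "NJ p (h @ [(a, l)]) =
   NJ p h \<union> (if fstep p (Fv p h) (ns p h) a = None then {} else {length h})"
  unfolding NJ_def using Fv_snoc_old[of _ h p a l] Fv_snoc_new[of p h a l]
  by (auto simp: less_Suc_eq simp del: Fv_snoc fstep.simps)

lemma NJ_sub: "NJ p h \<subseteq> {..<length h}" by (auto simp: NJ_def)
lemma NJ_less: "i \<in> NJ p h \<Longrightarrow> i < length h" by (auto simp: NJ_def)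

lemma LS_snoc: "LS p (h @ [(a, l)]) =
   LS p h \<union> (if fstep p (Fv p h) (ns p h) a = None then {} else {l})"
proof -
  have "(\<lambda>i. snd ((h @ [(a, l)]) ! i)) ` NJ p h = (\<lambda>i. snd (h ! i)) ` NJ p h"
    by (intro image_cong) (use NJ_sub[of p h] in \<open>auto simp: nth_append\<close>)
  then show ?thesis unfolding LS_def NJ_snoc by auto
qed

lemma Jz_snoc: "Jz p (h @ [(a, l)]) \<longleftrightarrow> Jz p h \<and> (fstep p (Fv p h) (ns p h) a = None \<longrightarrow> l = 0)"
proof -
  have "Jz p (h @ [(a, l)]) \<longleftrightarrow> (\<forall>i<length h. Fv p (h @ [(a, l)]) ! i = None \<longrightarrow> snd ((h @ [(a, l)]) ! i) = 0)
     \<and> (Fv p (h @ [(a, l)]) ! length h = None \<longrightarrow> snd ((h @ [(a, l)]) ! length h) = 0)"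
    unfolding Jz_def by (simp add: less_Suc_eq all_conj_distrib del: Fv_snoc fstep.simps)
  also have "(\<forall>i<length h. Fv p (h @ [(a, l)]) ! i = None \<longrightarrow> snd ((h @ [(a, l)]) ! i) = 0) \<longleftrightarrow> Jz p h"
    unfolding Jz_def by (simp add: nth_append Fv_snoc_old del: Fv_snoc fstep.simps)
  finally show ?thesis by (simp only: Fv_snoc_new nth_append_length snd_conv)
qed

lemma goodh_snoc: "goodh p (h @ [(a, l)]) \<longleftrightarrow> goodh p h \<and>
   (fstep p (Fv p h) (ns p h) a \<noteq> None \<longrightarrow>
     (\<forall>i\<in>NJ p h. (Fv p h ! i = fstep p (Fv p h) (ns p h) a) \<longleftrightarrow> (snd (h ! i) = l)))"
proof -
  let ?F = "fstep p (Fv p h) (ns p h) a"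
  have o1: "i \<in> NJ p h \<Longrightarrow> Fv p (h @ [(a, l)]) ! i = Fv p h ! i" for i
    by (rule Fv_snoc_old[OF NJ_less])
  have o2: "i \<in> NJ p h \<Longrightarrow> snd ((h @ [(a, l)]) ! i) = snd (h ! i)" for i
    by (rule snd_snoc_old[OF NJ_less])
  have n1: "Fv p (h @ [(a, l)]) ! length h = ?F" by (rule Fv_snoc_new)
  have n2: "snd ((h @ [(a, l)]) ! length h) = l" by simp
  have nn: "length h \<notin> NJ p h" using NJ_less by blast
  show ?thesis
  proof (cases "?F = None")
    case True
    then show ?thesis unfolding goodh_def NJ_snoc using o1 o2 by (simp del: Fv_snoc fstep.simps)
  next
    case False
    then have NJ': "NJ p (h @ [(a, l)]) = insert (length h) (NJ p h)"
      by (subst NJ_snoc) (simp only: if_False if_not_P[OF False]; auto)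
    let ?G = "\<lambda>i. Fv p (h @ [(a, l)]) ! i" and ?l = "\<lambda>i. snd ((h @ [(a, l)]) ! i)"
    have "goodh p (h @ [(a, l)]) \<longleftrightarrow>
        (\<forall>i\<in>insert (length h) (NJ p h). \<forall>i'\<in>insert (length h) (NJ p h). (?G i = ?G i') \<longleftrightarrow> (?l i = ?l i'))"
      unfolding goodh_def NJ' by (simp only:)
    also have "\<dots> \<longleftrightarrow> goodh p h \<and> (\<forall>i\<in>NJ p h. (Fv p h ! i = ?F) \<longleftrightarrow> (snd (h ! i) = l))"
    proof
      assume A: "\<forall>i\<in>insert (length h) (NJ p h). \<forall>i'\<in>insert (length h) (NJ p h). (?G i = ?G i') \<longleftrightarrow> (?l i = ?l i')"
      have "goodh p h" unfolding goodh_def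
      proof (intro ballI)
        fix i i' assume "i \<in> NJ p h" "i' \<in> NJ p h"
        then show "(Fv p h ! i = Fv p h ! i') \<longleftrightarrow> (snd (h ! i) = snd (h ! i'))"
          using A o1 o2 by auto
      qed
      moreover have "\<forall>i\<in>NJ p h. (Fv p h ! i = ?F) \<longleftrightarrow> (snd (h ! i) = l)"
      proof
        fix i assume i: "i \<in> NJ p h"
        have "(?G i = ?G (length h)) \<longleftrightarrow> (?l i = ?l (length h))" using A i by blast
        then show "(Fv p h ! i = ?F) \<longleftrightarrow> (snd (h ! i) = l)" using o1[OF i] o2[OF i] n1 n2 by simp
      qed
      ultimately show "goodh p h \<and> (\<forall>i\<in>NJ p h. (Fv p h ! i = ?F) \<longleftrightarrow> (snd (h ! i) = l))" ..
    next
      assume B: "goodh p h \<and> (\<forall>i\<in>NJ p h. (Fv p h ! i = ?F) \<longleftrightarrow> (snd (h ! i) = l))"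
      show "\<forall>i\<in>insert (length h) (NJ p h). \<forall>i'\<in>insert (length h) (NJ p h). (?G i = ?G i') \<longleftrightarrow> (?l i = ?l i')"
      proof (intro ballI)
        fix i i' assume i: "i \<in> insert (length h) (NJ p h)" and i': "i' \<in> insert (length h) (NJ p h)"
        show "(?G i = ?G i') \<longleftrightarrow> (?l i = ?l i')"
        proof (cases "i = length h"; cases "i' = length h")
          assume "i = length h" "i' = length h" then show ?thesis by simp
        next
          assume a: "i = length h" "i' \<noteq> length h"
          then have j: "i' \<in> NJ p h" using i' by simp
          then have "(Fv p h ! i' = ?F) \<longleftrightarrow> (snd (h ! i') = l)" using B by blast
          then show ?thesis using a(1) o1[OF j] o2[OF j] n1 n2 by auto
        next
          assume a: "i \<noteq> length h" "i' = length h"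
          then have j: "i \<in> NJ p h" using i by simp
          then have "(Fv p h ! i = ?F) \<longleftrightarrow> (snd (h ! i) = l)" using B by blast
          then show ?thesis using a(2) o1[OF j] o2[OF j] n1 n2 by auto
        next
          assume a: "i \<noteq> length h" "i' \<noteq> length h"
          then have "i \<in> NJ p h" "i' \<in> NJ p h" using i i' by auto
          then show ?thesis using B o1 o2 unfolding goodh_def by simp
        qed
      qed
    qed
    finally show ?thesis using False by simp
  qed
qed


lemma finite_LS: "finite (LS p h)" by (simp add: LS_def finite_NJ)

lemma Lam0_cons:
  assumes D: "card (LS p h) < M"
  shows "(\<Sum>l\<in>{0..M}. Lam0 p M (h @ [(a, l)])) = Lam0 p M h"
proof (cases "fstep p (Fv p h) (ns p h) a")
  case None
  have "Lam0 p M (h @ [(a, l)]) = (if l = 0 then Lam0 p M h else 0)" for l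
    unfolding Lam0_def using None
    by (simp add: Jz_snoc LS_snoc goodh_snoc del: Fv_snoc fstep.simps)
  then show ?thesis by (simp add: sum.delta del: Fv_snoc fstep.simps)
next
  case (Some f)
  let ?S = "{1..M}" and ?D = "card (LS p h)"
  have t: "Lam0 p M (h @ [(a, l)]) = (if Jz p h \<and> insert l (LS p h) \<subseteq> ?S \<and> goodh p h \<and>
      (\<forall>i\<in>NJ p h. (Fv p h ! i = Some f) \<longleftrightarrow> (snd (h ! i) = l)) then 1 / ffr M (card (insert l (LS p h))) else 0)" for l
    unfolding Lam0_def using Some
    by (simp add: Jz_snoc LS_snoc goodh_snoc del: Fv_snoc fstep.simps)
  show ?thesis
  proof (cases "Jz p h \<and> LS p h \<subseteq> ?S \<and> goodh p h")
    case False
    then have "Lam0 p M (h @ [(a, l)]) = 0" for l using t[of l] by auto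
    moreover have "Lam0 p M h = 0" using False by (auto simp: Lam0_def)
    ultimately show ?thesis by simp
  next
    case True
    then have J: "Jz p h" and LSS: "LS p h \<subseteq> ?S" and G: "goodh p h" by auto
    have L0: "Lam0 p M h = 1 / ffr M ?D" using True by (simp add: Lam0_def)
    show ?thesis
    proof (cases "\<exists>i0\<in>NJ p h. Fv p h ! i0 = Some f")
      case True
      then obtain i0 where i0: "i0 \<in> NJ p h" "Fv p h ! i0 = Some f" by auto
      let ?l0 = "snd (h ! i0)"
      have l0LS: "?l0 \<in> LS p h" using i0 by (auto simp: LS_def)
      have iff: "(\<forall>i\<in>NJ p h. (Fv p h ! i = Some f) \<longleftrightarrow> (snd (h ! i) = l)) \<longleftrightarrow> l = ?l0" for l
      proof
        assume "\<forall>i\<in>NJ p h. (Fv p h ! i = Some f) \<longleftrightarrow> (snd (h ! i) = l)"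
        then show "l = ?l0" using i0 by auto
      next
        assume l: "l = ?l0"
        show "\<forall>i\<in>NJ p h. (Fv p h ! i = Some f) \<longleftrightarrow> (snd (h ! i) = l)"
        proof
          fix i assume i: "i \<in> NJ p h"
          have "(Fv p h ! i = Fv p h ! i0) \<longleftrightarrow> (snd (h ! i) = snd (h ! i0))"
            using G i i0(1) unfolding goodh_def by blast
          then show "(Fv p h ! i = Some f) \<longleftrightarrow> (snd (h ! i) = l)" using i0(2) l by simp
        qed
      qed
      have "Lam0 p M (h @ [(a, l)]) = (if l = ?l0 then Lam0 p M h else 0)" for l
        using t[of l] iff[of l] J LSS G L0 l0LS by (auto simp: insert_absorb)
      moreover have "?l0 \<in> {0..M}" using l0LS LSS by auto
      ultimately show ?thesis by (simp add: sum.delta')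
    next
      case False
      have iff: "(\<forall>i\<in>NJ p h. (Fv p h ! i = Some f) \<longleftrightarrow> (snd (h ! i) = l)) \<longleftrightarrow> l \<notin> LS p h" for l
        using False by (auto simp: LS_def)
      have DM: "?D < M" by (rule D)
      have ff1: "ffr M (Suc ?D) = ffr M ?D * real (M - ?D)"
        by (simp add: ffr_def)
      have t2: "Lam0 p M (h @ [(a, l)]) = (if l \<in> ?S - LS p h then 1 / ffr M (Suc ?D) else 0)" for l
        using t[of l] iff[of l] J LSS G finite_LS[of p h] by auto
      have "(\<Sum>l\<in>{0..M}. Lam0 p M (h @ [(a, l)])) = (\<Sum>l\<in>{0..M}. if l \<in> ?S - LS p h then 1 / ffr M (Suc ?D) else 0)"
        by (simp add: t2)
      also have "\<dots> = real (card (?S - LS p h)) / ffr M (Suc ?D)"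
      proof -
        have e: "{0..M} \<inter> {l. l \<in> ?S - LS p h} = ?S - LS p h" by auto
        show ?thesis by (subst sum.If_cases) (simp_all only: e finite_atLeastAtMost sum_constant sum.neutral_const, simp)
      qed
      also have "card (?S - LS p h) = M - ?D"
        using card_Diff_subset[OF finite_LS LSS] by simp
      also have "real (M - ?D) / ffr M (Suc ?D) = 1 / ffr M ?D"
      proof -
        have nz: "real (M - ?D) \<noteq> 0" using DM by simp
        show ?thesis unfolding ff1 by (rule nonzero_divide_mult_cancel_right[OF nz])
      qed
      finally show ?thesis using L0 by simp
    qed
  qed
qed

lemma real_nat_cases: "real (n::nat) = 0 \<or> 1 \<le> real n" by (cases n) auto
lemma ffr_nonneg: "0 \<le> ffr M D" unfolding ffr_def by (rule of_nat_0_le_iff)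
lemma ffr_cases: "ffr M D = 0 \<or> 1 \<le> ffr M D" unfolding ffr_def by (rule real_nat_cases)
lemma Lam0_nonneg: "0 \<le> Lam0 p M h" using ffr_nonneg by (simp add: Lam0_def)
lemma Lam0_le1: "Lam0 p M h \<le> 1"
proof -
  have "1 / ffr M D \<le> 1" for D using ffr_cases[of M D] by auto
  then show ?thesis by (simp add: Lam0_def)
qed


lemma real_le_pow: "a \<le> (p ^ k) ^ s \<Longrightarrow> real a \<le> (real p ^ k) ^ s"
proof -
  assume "a \<le> (p ^ k) ^ s"
  then have "real a \<le> real ((p ^ k) ^ s)" by (simp only: of_nat_le_iff)
  then show ?thesis by simp
qed

lemma cc_bounds:
  assumes p0: "0 < p" shows "0 \<le> cc p k \<sigma> h" "cc p k \<sigma> h \<le> 1"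
proof -
  have "card {xs \<in> XX p k (ns p h). cons p k \<sigma> xs h} \<le> card (XX p k (ns p h))"
    by (rule card_mono[OF finite_XX[OF p0]]) auto
  then have "real (card {xs \<in> XX p k (ns p h). cons p k \<sigma> xs h}) \<le> (real p ^ k) ^ ns p h"
    using card_XX[OF p0] by (intro real_le_pow) simp
  moreover have "0 < (real p ^ k) ^ ns p h" using p0 by simp
  ultimately show "0 \<le> cc p k \<sigma> h" "cc p k \<sigma> h \<le> 1" by (auto simp: cc_def divide_le_eq_1)
qed

lemma Lamk_bounds:
  assumes p0: "0 < p" shows "0 \<le> Lamk p k M h" "Lamk p k M h \<le> 1"
proof -
  have s0: "0 \<le> (\<Sum>\<sigma>\<in>Inj p k M. cc p k \<sigma> h)" by (rule sum_nonneg) (use cc_bounds[OF p0] in auto)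
  have s1: "(\<Sum>\<sigma>\<in>Inj p k M. cc p k \<sigma> h) \<le> real (card (Inj p k M))"
    using sum_mono[of "Inj p k M" "\<lambda>\<sigma>. cc p k \<sigma> h" "\<lambda>_. 1"] cc_bounds[OF p0] by simp
  show "0 \<le> Lamk p k M h" using s0 by (simp add: Lamk_def)
  show "Lamk p k M h \<le> 1" using s0 s1 by (cases "card (Inj p k M) = 0") (auto simp: Lamk_def divide_le_eq_1)
qed

lemma card_LS_le: "card (LS p h) \<le> length h"
proof -
  have "card (LS p h) \<le> card (NJ p h)" unfolding LS_def by (rule card_image_le[OF finite_NJ])
  also have "\<dots> \<le> card {..<length h}" by (rule card_mono) (auto simp: NJ_def)
  finally show ?thesis by simp
qed

lemma card_NJ_le: "card (NJ p h) \<le> length h"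
proof -
  have "card (NJ p h) \<le> card {..<length h}" by (rule card_mono) (auto simp: NJ_def)
  then show ?thesis by simp
qed

lemma good_vec_pos: "good_vec p s f \<Longrightarrow> good_vec p s g \<Longrightarrow> f \<noteq> g \<Longrightarrow> 0 < s"
  by (rule ccontr) (auto simp: good_vec_def fun_eq_iff)

lemma bad_bound:
  assumes pr: "prime p" and G: "goodh p h"
  shows "real (card {xs \<in> XX p k (ns p h). \<not> patok p k h xs})
     \<le> real (length h) ^ 2 * (real p ^ k) ^ ns p h / real p ^ k"
proof -
  have p1: "1 < p" using pr prime_gt_1_nat by blast
  have p0: "0 < p" using p1 by simp
  let ?s = "ns p h" and ?X = "XX p k (ns p h)"
  let ?P = "{ii \<in> NJ p h \<times> NJ p h. Fv p h ! fst ii \<noteq> Fv p h ! snd ii}"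
  let ?E = "\<lambda>ii. {xs \<in> ?X. evl p k ?s (the (Fv p h ! fst ii)) xs = evl p k ?s (the (Fv p h ! snd ii)) xs}"
  have sub: "{xs \<in> ?X. \<not> patok p k h xs} \<subseteq> (\<Union>ii\<in>?P. ?E ii)"
  proof
    fix xs assume xs: "xs \<in> {xs \<in> ?X. \<not> patok p k h xs}"
    then obtain i i' where ii: "i \<in> NJ p h" "i' \<in> NJ p h" and
      ne: "(evl p k ?s (the (Fv p h ! i)) xs = evl p k ?s (the (Fv p h ! i')) xs) \<noteq> (snd (h ! i) = snd (h ! i'))"
      unfolding patok_def by blast
    have g: "(Fv p h ! i = Fv p h ! i') \<longleftrightarrow> (snd (h ! i) = snd (h ! i'))" using G ii unfolding goodh_def by blast
    have "Fv p h ! i \<noteq> Fv p h ! i'" using ne g by auto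
    moreover have "evl p k ?s (the (Fv p h ! i)) xs = evl p k ?s (the (Fv p h ! i')) xs" using ne g calculation by auto
    ultimately show "xs \<in> (\<Union>ii\<in>?P. ?E ii)" using ii xs by (auto intro!: bexI[where x="(i, i')"])
  qed
  have Eb: "real (card (?E ii)) \<le> (real p ^ k) ^ ?s / real p ^ k" if ii: "ii \<in> ?P" for ii
  proof -
    obtain i i' where iieq: "ii = (i, i')" by (cases ii)
    have i: "i \<in> NJ p h" "i' \<in> NJ p h" "Fv p h ! i \<noteq> Fv p h ! i'" using ii iieq by auto
    obtain f where f: "Fv p h ! i = Some f" using i(1) by (auto simp: NJ_def)
    obtain g where g: "Fv p h ! i' = Some g" using i(2) by (auto simp: NJ_def)
    have gf: "good_vec p ?s f" using Fv_good[OF p1 _ f] i(1) by (auto simp: NJ_def)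
    have gg: "good_vec p ?s g" using Fv_good[OF p1 _ g] i(2) by (auto simp: NJ_def)
    have fg: "f \<noteq> g" using i(3) f g by auto
    have s0: "0 < ?s" by (rule good_vec_pos[OF gf gg fg])
    have "card (?E ii) \<le> (p ^ k) ^ (?s - 1)"
      using collision[OF pr gf gg fg, of k] iieq f g by simp
    then have "real (card (?E ii)) \<le> (real p ^ k) ^ (?s - 1)"
      by (rule real_le_pow)
    also have "(real p ^ k) ^ (?s - 1) = (real p ^ k) ^ ?s / real p ^ k"
      using s0 p0 by (cases ?s) (auto simp: field_simps)
    finally show ?thesis .
  qed
  have finP: "finite ?P" using finite_NJ by auto
  have finU: "finite (\<Union>ii\<in>?P. ?E ii)" by (rule finite_subset[OF _ finite_XX[OF p0]]) auto
  have "card {xs \<in> ?X. \<not> patok p k h xs} \<le> card (\<Union>ii\<in>?P. ?E ii)"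
    by (rule card_mono[OF finU sub])
  also have "\<dots> \<le> (\<Sum>ii\<in>?P. card (?E ii))" by (rule card_UN_le[OF finP])
  finally have "real (card {xs \<in> ?X. \<not> patok p k h xs}) \<le> real (\<Sum>ii\<in>?P. card (?E ii))"
    by (simp only: of_nat_le_iff)
  also have "\<dots> = (\<Sum>ii\<in>?P. real (card (?E ii)))" by simp
  also have "\<dots> \<le> (\<Sum>ii\<in>?P. (real p ^ k) ^ ?s / real p ^ k)" by (rule sum_mono) (rule Eb)
  also have "\<dots> = real (card ?P) * ((real p ^ k) ^ ?s / real p ^ k)" by simp
  also have "\<dots> \<le> real (length h) ^ 2 * ((real p ^ k) ^ ?s / real p ^ k)"
  proof (rule mult_right_mono)
    have "card ?P \<le> card (NJ p h \<times> NJ p h)" by (rule card_mono) (use finite_NJ in auto)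
    also have "\<dots> = card (NJ p h) ^ 2" by (simp add: card_cartesian_product power2_eq_square)
    also have "\<dots> \<le> length h ^ 2" by (rule power_mono[OF card_NJ_le]) simp
    finally have "real (card ?P) \<le> real (length h ^ 2)" by (simp only: of_nat_le_iff)
    then show "real (card ?P) \<le> real (length h) ^ 2" by simp
  qed (use p0 in simp)
  finally show ?thesis by simp
qed

lemma Lamk_good:
  assumes pr: "prime p" and NM: "p ^ k \<le> M" and len: "length h \<le> p ^ k" and G: "goodh p h"
  shows "Lamk p k M h \<le> Lam0 p M h"
    "(1 - real (length h) ^ 2 / real p ^ k) * Lam0 p M h \<le> Lamk p k M h"
proof -
  have p0: "0 < p" using pr prime_gt_0_nat by blast
  have D: "card (LS p h) \<le> p ^ k" using card_LS_le[of p h] len by simp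
  let ?X = "XX p k (ns p h)" and ?N = "real p ^ k" and ?s = "ns p h"
  have Npos: "0 < ?N ^ ?s" "0 < ?N" using p0 by auto
  let ?c = "real (card {xs \<in> ?X. patok p k h xs})"
  have c1: "?c \<le> ?N ^ ?s"
  proof -
    have "card {xs \<in> ?X. patok p k h xs} \<le> card ?X" by (rule card_mono[OF finite_XX[OF p0]]) auto
    then show ?thesis using card_XX[OF p0] by (intro real_le_pow) simp
  qed
  have c2: "?N ^ ?s - real (length h) ^ 2 * ?N ^ ?s / ?N \<le> ?c"
  proof -
    have "card ?X = card {xs \<in> ?X. patok p k h xs} + card {xs \<in> ?X. \<not> patok p k h xs}"
      by (subst card_Un_disjoint[symmetric]) (auto intro!: arg_cong[where f=card] finite_XX[OF p0])
    then have "real (card ?X) = ?c + real (card {xs \<in> ?X. \<not> patok p k h xs})" by simp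
    moreover have "real (card ?X) = ?N ^ ?s" using card_XX[OF p0] by simp
    ultimately show ?thesis using bad_bound[OF pr G, of k] by simp
  qed
  have L: "Lamk p k M h = (if Jz p h \<and> LS p h \<subseteq> {1..M} then ?c / ?N ^ ?s / ffr M (card (LS p h)) else 0)"
    by (rule Lamk_closed[OF p0 NM D])
  have L0: "Lam0 p M h = (if Jz p h \<and> LS p h \<subseteq> {1..M} then 1 / ffr M (card (LS p h)) else 0)"
    using G by (simp add: Lam0_def)
  have ff0: "0 \<le> ffr M (card (LS p h))" by (rule ffr_nonneg)
  show "Lamk p k M h \<le> Lam0 p M h"
  proof -
    have "?c / ?N ^ ?s \<le> 1" using c1 Npos by (simp add: divide_le_eq_1)
    then have "?c / ?N ^ ?s / ffr M (card (LS p h)) \<le> 1 / ffr M (card (LS p h))"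
      using ff0 by (rule divide_right_mono)
    then show ?thesis using L L0 by simp
  qed
  show "(1 - real (length h) ^ 2 / ?N) * Lam0 p M h \<le> Lamk p k M h"
  proof -
    have "1 - real (length h) ^ 2 / ?N \<le> ?c / ?N ^ ?s"
      using c2 Npos by (simp add: field_simps)
    then have "(1 - real (length h) ^ 2 / ?N) / ffr M (card (LS p h)) \<le> ?c / ?N ^ ?s / ffr M (card (LS p h))"
      using ff0 by (rule divide_right_mono)
    then show ?thesis using L L0 by simp
  qed
qed

lemma TT_scale:
  assumes L: "finite L" and B: "\<And>h. \<bar>Lam h\<bar> \<le> B"
  shows "TT A L (\<lambda>h. c * Lam h) Ob n h = c * TT A L Lam Ob n h"
  using TT_sum[OF L, of "{0::nat}" "\<lambda>_. Lam" B A "\<lambda>_. c" Ob n h] B by simp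

lemma TT_zero:
  assumes L: "finite L" shows "TT A L (\<lambda>h. 0) Ob n h = 0"
  using TT_sum[OF L, of "{}::nat set" "\<lambda>_. \<lambda>_. 0" 0 A "\<lambda>_. 0" Ob n h] by simp

lemma cc_Nil: "0 < p \<Longrightarrow> cc p k \<sigma> [] = 1"
proof -
  assume p0: "0 < p"
  have "{xs \<in> XX p k 0. cons p k \<sigma> xs []} = XX p k 0" by (auto simp: cons_def)
  then show ?thesis by (simp add: cc_def card_XX[OF p0])
qed

lemma Inj_props:
  assumes "\<sigma> \<in> Inj p k M"
  shows "inj_on \<sigma> (HH p k)" "0 \<notin> \<sigma> ` HH p k" "\<sigma> ` HH p k \<subseteq> {0..M}"
  using assms by (auto simp: Inj_def PiE_iff)

lemma finite_Inj: "0 < p \<Longrightarrow> finite (Inj p k M)"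
  unfolding Inj_def
  by (rule finite_subset[of _ "HH p k \<rightarrow>\<^sub>E {1..M}"]) (auto intro: finite_PiE finite_HH)

lemma card_Inj_pos: "0 < p \<Longrightarrow> p ^ k \<le> M \<Longrightarrow> 0 < card (Inj p k M)"
  by (simp add: card_Inj prod_pos)

lemma world_avg:
  assumes pr: "prime p" and NM: "p ^ k \<le> M"
  shows "TT A {0..M} (Lamk p k M) Ob n [] =
     (\<Sum>\<sigma>\<in>Inj p k M. measure_pmf.prob (exec (Gs p k \<sigma>) A n []) Ob) / real (card (Inj p k M))"
proof -
  have p1: "1 < p" using pr prime_gt_1_nat by blast
  have p0: "0 < p" using p1 by simp
  let ?I = "Inj p k M"
  have eq: "Lamk p k M = (\<lambda>h. \<Sum>\<sigma>\<in>?I. (1 / real (card ?I)) * cc p k \<sigma> h)"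
    by (auto simp: fun_eq_iff Lamk_def sum_divide_distrib)
  have "TT A {0..M} (Lamk p k M) Ob n [] = (\<Sum>\<sigma>\<in>?I. (1 / real (card ?I)) * TT A {0..M} (cc p k \<sigma>) Ob n [])"
    unfolding eq by (rule TT_sum[where B=1]) (use finite_Inj[OF p0] cc_bounds[OF p0] in auto)
  also have "\<dots> = (\<Sum>\<sigma>\<in>?I. (1 / real (card ?I)) * measure_pmf.prob (exec (Gs p k \<sigma>) A n []) Ob)"
  proof (rule sum.cong[OF refl])
    fix \<sigma> assume s: "\<sigma> \<in> ?I"
    note ip = Inj_props[OF s]
    have "TT A {0..M} (cc p k \<sigma>) Ob n [] = cc p k \<sigma> [] * measure_pmf.prob (exec (Gs p k \<sigma>) A n []) Ob"
      by (rule link[OF p1 ip(1) ip(2)]) (use ip(3) in auto)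
    then show "(1 / real (card ?I)) * TT A {0..M} (cc p k \<sigma>) Ob n [] =
        (1 / real (card ?I)) * measure_pmf.prob (exec (Gs p k \<sigma>) A n []) Ob"
      by (simp add: cc_Nil[OF p0])
  qed
  also have "\<dots> = (\<Sum>\<sigma>\<in>?I. measure_pmf.prob (exec (Gs p k \<sigma>) A n []) Ob) / real (card ?I)"
    by (simp add: sum_divide_distrib)
  finally show ?thesis .
qed

lemma world_total:
  assumes pr: "prime p" and NM: "p ^ k \<le> M"
  shows "TT A {0..M} (Lamk p k M) UNIV n [] = 1"
proof -
  have p0: "0 < p" using pr prime_gt_0_nat by blast
  have "TT A {0..M} (Lamk p k M) UNIV n [] = (\<Sum>\<sigma>\<in>Inj p k M. 1) / real (card (Inj p k M))"
    unfolding world_avg[OF pr NM] by simp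
  then show ?thesis using card_Inj_pos[OF p0 NM] by simp
qed

lemma Lam0_Nil: "Lam0 p M [] = 1"
  by (simp add: Lam0_def Jz_def LS_def NJ_def goodh_def ffr_def)

lemma Lam0_total:
  assumes qM: "q \<le> M"
  shows "TT A {0..M} (Lam0 p M) UNIV q [] = 1"
proof -
  have "TT A {0..M} (Lam0 p M) UNIV q [] = Lam0 p M []"
  proof (rule TT_total[where B=1])
    show "\<bar>Lam0 p M h\<bar> \<le> 1" for h using Lam0_nonneg Lam0_le1 by (simp add: abs_le_iff)
  next
    fix h' :: "(action \<times> nat) list" assume "length h' < length ([] :: (action \<times> nat) list) + q"
    then have "card (LS p h') < M" using card_LS_le[of p h'] qM by simp
    then show "(\<Sum>l\<in>{0..M}. Lam0 p M (h' @ [(Sample, l)])) = Lam0 p M h'"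
      "\<And>i j. (\<Sum>l\<in>{0..M}. Lam0 p M (h' @ [(Mult i j, l)])) = Lam0 p M h'"
      by (auto intro: Lam0_cons)
  qed simp
  then show ?thesis by (simp add: Lam0_Nil)
qed

lemma world_close:
  assumes pr: "prime p" and NM: "p ^ k \<le> M" and qN: "q \<le> p ^ k"
  shows "\<bar>TT A {0..M} (Lamk p k M) Ob q [] - TT A {0..M} (Lam0 p M) Ob q []\<bar> \<le> real q ^ 2 / real p ^ k"
proof -
  have p0: "0 < p" using pr prime_gt_0_nat by blast
  let ?L = "{0..M}"
  have finL: "finite ?L" by simp
  let ?T = "\<lambda>Lam Ob. TT A ?L Lam Ob q []"
  define Lk where "Lk = Lamk p k M"
  define L0 where "L0 = Lam0 p M"
  define Gk where "Gk = (\<lambda>h. if goodh p h then Lk h else 0)"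
  define Bk where "Bk = (\<lambda>h. if goodh p h then 0 else Lk h)"
  define e where "e = real q ^ 2 / real p ^ k"
  have e0: "0 \<le> e" by (simp add: e_def)
  have qM: "q \<le> M" using qN NM by simp
  have Lkb: "0 \<le> Lk h" "Lk h \<le> 1" for h using Lamk_bounds[OF p0] by (auto simp: Lk_def)
  have L0b: "0 \<le> L0 h" "L0 h \<le> 1" for h using Lam0_nonneg Lam0_le1 by (auto simp: L0_def)
  have Lka: "\<bar>Lk h\<bar> \<le> 1" for h using Lkb[of h] by simp
  have L0a: "\<bar>L0 h\<bar> \<le> 1" for h using L0b[of h] by simp
  have Gka: "\<bar>Gk h\<bar> \<le> 1" for h using Lkb[of h] by (simp add: Gk_def)
  have Bka: "\<bar>Bk h\<bar> \<le> 1" for h using Lkb[of h] by (simp add: Bk_def)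
  have L0s: "\<bar>(1 - e) * L0 h\<bar> \<le> \<bar>1 - e\<bar>" for h using L0b[of h] by (simp add: abs_mult mult_left_le)
  have bad0: "\<not> goodh p h \<Longrightarrow> L0 h = 0" for h by (simp add: L0_def Lam0_def)
  have G1: "Gk h \<le> L0 h" if "length h \<le> q" for h
  proof (cases "goodh p h")
    case True then show ?thesis using Lamk_good(1)[OF pr NM _ True] that qN by (simp add: Gk_def Lk_def L0_def)
  next
    case False then show ?thesis using L0b by (simp add: Gk_def)
  qed
  have G2: "(1 - e) * L0 h \<le> Gk h" if "length h \<le> q" for h
  proof (cases "goodh p h")
    case True
    have "real (length h) ^ 2 \<le> real q ^ 2" using that by (simp add: power_mono)
    then have "1 - e \<le> 1 - real (length h) ^ 2 / real p ^ k" using p0 by (simp add: e_def divide_right_mono)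
    then have "(1 - e) * L0 h \<le> (1 - real (length h) ^ 2 / real p ^ k) * L0 h"
      using L0b by (simp add: mult_right_mono)
    also have "\<dots> \<le> Lk h" using Lamk_good(2)[OF pr NM _ True] that qN by (simp add: Lk_def L0_def)
    finally show ?thesis using True by (simp add: Gk_def)
  next
    case False then show ?thesis using bad0 by (simp add: Gk_def)
  qed
  have split: "?T Lk Ob' = ?T Gk Ob' + ?T Bk Ob'" for Ob'
  proof -
    have eq: "Lk = (\<lambda>h. \<Sum>i\<in>{0::nat, 1}. 1 * (if i = 0 then Gk else Bk) h)"
      by (auto simp: fun_eq_iff Gk_def Bk_def)
    have "?T Lk Ob' = (\<Sum>i\<in>{0::nat, 1}. 1 * ?T (if i = 0 then Gk else Bk) Ob')"
      by (subst eq, rule TT_sum[OF finL, where B=1]) (use Gka Bka in auto)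
    then show ?thesis by simp
  qed
  have TLk1: "?T Lk UNIV = 1" unfolding Lk_def by (rule world_total[OF pr NM])
  have TL01: "?T L0 UNIV = 1" unfolding L0_def by (rule Lam0_total[OF qM])
  have "?T L0 Ob \<le> ?T L0 UNIV" by (rule TT_mono_set[OF finL L0a]) (use L0b in auto)
  then have TL0le: "?T L0 Ob \<le> 1" using TL01 by simp
  have "?T (\<lambda>_. 0) Ob \<le> ?T L0 Ob" by (rule TT_mono[OF finL _ L0a]) (use L0b in auto)
  then have TL0ge: "0 \<le> ?T L0 Ob" using TT_zero[OF finL] by simp
  have Gup: "?T Gk Ob \<le> ?T L0 Ob" by (rule TT_mono[OF finL Gka L0a]) (use G1 in simp)
  have Glow: "(1 - e) * ?T L0 Ob' \<le> ?T Gk Ob'" for Ob'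
  proof -
    have B1: "\<bar>(1 - e) * L0 h\<bar> \<le> 1 + e" for h
    proof -
      have "\<bar>1 - e\<bar> \<le> 1 + e" using e0 by linarith
      then show ?thesis using L0s[of h] by linarith
    qed
    have B2: "\<bar>Gk h\<bar> \<le> 1 + e" for h using Gka[of h] e0 by linarith
    have "?T (\<lambda>h. (1 - e) * L0 h) Ob' \<le> ?T Gk Ob'"
      by (rule TT_mono[OF finL B1 B2]) (use G2 in simp)
    then show ?thesis by (simp add: TT_scale[OF finL L0a])
  qed
  have "?T (\<lambda>_. 0) Ob \<le> ?T Bk Ob" by (rule TT_mono[OF finL _ Bka]) (use Lkb in \<open>auto simp: Bk_def\<close>)
  then have Bge: "0 \<le> ?T Bk Ob" using TT_zero[OF finL] by simp
  have Ble: "?T Bk Ob \<le> ?T Bk UNIV"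
    by (rule TT_mono_set[OF finL Bka]) (use Lkb in \<open>auto simp: Bk_def\<close>)
  have BU: "?T Bk UNIV \<le> e"
  proof -
    have "?T Bk UNIV = 1 - ?T Gk UNIV" using split[of UNIV] TLk1 by simp
    also have "\<dots> \<le> 1 - (1 - e)" using Glow[of UNIV] TL01 by simp
    finally show ?thesis by simp
  qed
  have up: "?T Lk Ob \<le> ?T L0 Ob + e" using split[of Ob] Gup Ble BU by simp
  have low: "?T L0 Ob - e \<le> ?T Lk Ob"
  proof -
    have "?T L0 Ob - e \<le> (1 - e) * ?T L0 Ob" using TL0le e0 by (simp add: algebra_simps mult_left_le)
    also have "\<dots> \<le> ?T Gk Ob" by (rule Glow)
    finally show ?thesis using split[of Ob] Bge by simp
  qed
  show ?thesis using up low by (simp add: e_def Lk_def L0_def abs_le_iff)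
qed

lemma Gs_class:
  assumes pr: "prime p" and s: "\<sigma> \<in> Inj p k M" and k: "k = m - 1 \<or> k = m"
  shows "Gs p k \<sigma> \<in> group_class p m"
  using Gs_props[OF Inj_props(1)[OF s]] k by (auto simp: group_class_def)

lemma Gs_card:
  assumes pr: "prime p" and s: "\<sigma> \<in> Inj p k M"
  shows "card (carrier (Gs p k \<sigma>)) = p ^ k"
proof -
  have p0: "0 < p" using pr prime_gt_0_nat by blast
  show ?thesis using card_image[OF Inj_props(1)[OF s]] card_HH[OF p0] by (simp add: Gs_def)
qed

lemma core:
  assumes pr: "prime p" and m: "2 \<le> m" and dec: "decides_with p m A q"
  shows "real p ^ (m - 1) \<le> 6 * real q ^ 2"
proof (rule ccontr)
  assume "\<not> ?thesis"
  then have small: "6 * real q ^ 2 < real p ^ (m - 1)" by simp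
  have p1: "1 < p" using pr prime_gt_1_nat by blast
  have p0: "0 < p" using p1 by simp
  define M where "M = p ^ m"
  have NM1: "p ^ (m - 1) \<le> M" unfolding M_def using p1 by (intro power_increasing) auto
  have NM2: "p ^ m \<le> M" unfolding M_def by simp
  have "real q \<le> real q ^ 2" by (cases q) (auto simp: power2_eq_square)
  then have "real q < real p ^ (m - 1)" using small by linarith
  then have qN1: "q \<le> p ^ (m - 1)" by (metis less_imp_le of_nat_less_iff of_nat_power)
  have qN2: "q \<le> p ^ m" using qN1 NM1 M_def by simp
  let ?O = "{Some False}"
  let ?T0 = "TT A {0..M} (Lam0 p M) ?O q []"
  let ?P1 = "TT A {0..M} (Lamk p (m - 1) M) ?O q []"
  let ?P2 = "TT A {0..M} (Lamk p m M) ?O q []"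
  have c1: "\<bar>?P1 - ?T0\<bar> \<le> real q ^ 2 / real p ^ (m - 1)" by (rule world_close[OF pr NM1 qN1])
  have c2: "\<bar>?P2 - ?T0\<bar> \<le> real q ^ 2 / real p ^ m" by (rule world_close[OF pr NM2 qN2])
  have "real q ^ 2 / real p ^ m \<le> real q ^ 2 / real p ^ (m - 1)"
    using p1 by (intro divide_left_mono) (auto intro!: power_increasing)
  then have c2': "\<bar>?P2 - ?T0\<bar> \<le> real q ^ 2 / real p ^ (m - 1)" using c2 by linarith
  have "2 / 3 \<le> ?P1"
  proof -
    let ?I = "Inj p (m - 1) M"
    have each: "2 / 3 \<le> measure_pmf.prob (exec (Gs p (m - 1) \<sigma>) A q []) ?O" if s: "\<sigma> \<in> ?I" for \<sigma>
    proof -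
      have G: "Gs p (m - 1) \<sigma> \<in> group_class p m" by (rule Gs_class[OF pr s]) simp
      have "\<not> (Gs p (m - 1) \<sigma> \<cong> Zp_pow p m)"
      proof
        assume "Gs p (m - 1) \<sigma> \<cong> Zp_pow p m"
        then have "card (carrier (Gs p (m - 1) \<sigma>)) = card (carrier (Zp_pow p m))" by (rule iso_same_card)
        then have "p ^ (m - 1) = p ^ m" using Gs_card[OF pr s] card_HH[OF p0, of m] by (simp add: HH_def)
        moreover have "p ^ (m - 1) < p ^ m" using p1 m by (intro power_strict_increasing) auto
        ultimately show False by simp
      qed
      then show ?thesis using dec G unfolding decides_with_def by force
    qed
    have cpos: "0 < card ?I" by (rule card_Inj_pos[OF p0 NM1])
    have "(\<Sum>\<sigma>\<in>?I. 2 / 3) \<le> (\<Sum>\<sigma>\<in>?I. measure_pmf.prob (exec (Gs p (m - 1) \<sigma>) A q []) ?O)"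
      by (rule sum_mono) (rule each)
    then have "2 / 3 * real (card ?I) \<le> (\<Sum>\<sigma>\<in>?I. measure_pmf.prob (exec (Gs p (m - 1) \<sigma>) A q []) ?O)"
      by (simp add: mult.commute)
    then show ?thesis unfolding world_avg[OF pr NM1] using cpos by (simp add: field_simps)
  qed
  moreover have "?P2 \<le> 1 / 3"
  proof -
    let ?I = "Inj p m M"
    have each: "measure_pmf.prob (exec (Gs p m \<sigma>) A q []) ?O \<le> 1 / 3" if s: "\<sigma> \<in> ?I" for \<sigma>
    proof -
      have G: "Gs p m \<sigma> \<in> group_class p m" by (rule Gs_class[OF pr s]) simp
      have iso: "Gs p m \<sigma> \<cong> Zp_pow p m" using Gs_props(2)[OF Inj_props(1)[OF s]] .
      let ?E = "exec (Gs p m \<sigma>) A q []"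
      have t: "2 / 3 \<le> measure_pmf.prob ?E {Some True}" using dec G iso unfolding decides_with_def by force
      have "measure_pmf.prob ?E ?O \<le> measure_pmf.prob ?E (UNIV - {Some True})"
        by (rule measure_pmf.finite_measure_mono) auto
      also have "\<dots> = 1 - measure_pmf.prob ?E {Some True}"
        using measure_pmf.prob_compl[of "{Some True}" ?E] by simp
      finally show ?thesis using t by simp
    qed
    have cpos: "0 < card ?I" by (rule card_Inj_pos[OF p0 NM2])
    have "(\<Sum>\<sigma>\<in>?I. measure_pmf.prob (exec (Gs p m \<sigma>) A q []) ?O) \<le> (\<Sum>\<sigma>\<in>?I. 1 / 3)"
      by (rule sum_mono) (rule each)
    then have "(\<Sum>\<sigma>\<in>?I. measure_pmf.prob (exec (Gs p m \<sigma>) A q []) ?O) \<le> 1 / 3 * real (card ?I)"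
      by (simp add: mult.commute)
    then show ?thesis unfolding world_avg[OF pr NM2] using cpos by (simp add: field_simps)
  qed
  ultimately have "1 / 3 \<le> 2 * (real q ^ 2 / real p ^ (m - 1))" using c1 c2' by (simp add: abs_le_iff)
  then have "real p ^ (m - 1) \<le> 6 * real q ^ 2" using p0 by (simp add: field_simps)
  then show False using small by simp
qed

lemma ln2_ge_half: "1 / 2 \<le> ln (2::real)"
proof -
  have "ln (1 / 2 :: real) \<le> 1 / 2 - 1" by (rule ln_le_minus_one) simp
  then show ?thesis by (simp add: ln_div)
qed

theorem mainTheorem15:
  "\<exists>c > (0::real). \<forall>p m (A :: algorithm) q.
     prime p \<longrightarrow> m \<ge> 2 \<longrightarrow> decides_with p m A q \<longrightarrow>
     real q \<ge> c * real p powr ((real m - 1) / 2) / ln (real p)"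
proof (intro exI[of _ "1 / 8"] conjI allI impI)
  show "(0::real) < 1 / 8" by simp
  fix p m :: nat and A :: algorithm and q :: nat
  assume pr: "prime p" and m: "2 \<le> m" and dec: "decides_with p m A q"
  have p1: "1 < p" using pr prime_gt_1_nat by blast
  have p0: "0 < real p" using p1 by simp
  let ?X = "real p powr ((real m - 1) / 2)"
  have X0: "0 \<le> ?X" by simp
  have "?X ^ 2 = ?X * ?X" by (simp add: power2_eq_square)
  also have "\<dots> = real p powr ((real m - 1) / 2 + (real m - 1) / 2)" by (simp only: powr_add)
  also have "(real m - 1) / 2 + (real m - 1) / 2 = real m - 1" by simp
  finally have X2a: "?X ^ 2 = real p powr (real m - 1)" .
  have e: "real m - 1 = real (m - 1)" using m by simp
  have X2b: "real p powr (real m - 1) = real p ^ (m - 1)" unfolding e using p0 by (simp add: powr_realpow)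
  have X2: "?X ^ 2 = real p ^ (m - 1)" using X2a X2b by simp
  have q0: "0 \<le> real q ^ 2" by simp
  have "?X ^ 2 \<le> 9 * real q ^ 2" using core[OF pr m dec] X2 q0 by linarith
  then have "?X ^ 2 \<le> (3 * real q) ^ 2" by (simp add: power_mult_distrib)
  then have X3: "?X \<le> 3 * real q" by (rule power2_le_imp_le) simp
  have "ln 2 \<le> ln (real p)" using p1 by simp
  then have lnp: "1 / 2 \<le> ln (real p)" using ln2_ge_half by linarith
  have "1 / 8 * ?X / ln (real p) \<le> 1 / 8 * ?X / (1 / 2)"
    by (rule divide_left_mono) (use lnp X0 in auto)
  also have "\<dots> = ?X / 4" by simp
  also have "\<dots> \<le> real q" using X3 by simp
  finally show "1 / 8 * ?X / ln (real p) \<le> real q" .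
qed

end
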